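(* Consider the incentivized RL problem and the Hidden Hallucination algorithm described in the context, with a reward-independent prior $\mathbf{p}$ supported on deterministic MDPs. Assume that $r_{\min}>0$ and $\mathcal{C}:=f_{\min}(\varepsilon_{\mathrm{pun}})>0$, where $\varepsilon_{\mathrm{pun}}=r_{\min}/(2H)$. Run the algorithm with $n_{\mathrm{lrn}}=1$, punishment parameter $\varepsilon_{\mathrm{pun}}$, and $N_{\mathrm{ph}}=\lceil 6H\,r_{\min}^{-1}\mathcal{C}^{-SAH}\rceil$. Then the algorithm visits all reachable triples $(x,a,h)$ almost surely within $K=\mathcal{C}^{-SAH}\cdot O(SAH^2 r_{\min}^{-1})$ episodes. Moreover, the algorithm visits a new $(x,a,h)$ triple in every phase, until all reachable triples are visited.
   Context: MDPs. Fix positive integers $S,A,H$ (states $[S]$, actions $[A]$, stages $[H]$). An MDP model $\mu$ specifies for each triple $(x,a,h)$ a reward distribution $R_\mu(x,a,h)$ on $[0,1]$ (all supported on a common countable set) with mean $r_\mu(x,a,h)$, a transition distribution $p_\mu(\cdot\mid x,a,h)$ on $[S]$ and an initial distribution $p_\mu(\cdot\mid0)$. In an episode $x_1\sim p_\mu(\cdot\mid0)$; at stage $h$ the agent observes $x_h$, picks $a_h$, receives $r_h\sim R_\mu(x_h,a_h,h)$ and moves to $x_{h+1}\sim p_\mu(\cdot\mid x_h,a_h,h)$. A model is deterministic if all these distributions are point masses. $\Pi_{\mathrm{mkv}}$ is the set of deterministic Markov policies $\pi:[S]\times[H]\to[A]$; $V(\pi,\mu)$ is the expected total reward of $\pi$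 in $\mu$. A triple $(x,a,h)$ is visited in an episode if $(x_h,a_h)=(x,a)$; for a deterministic true model $\mu_\star$, $(x,a,h)$ is reachable if some $\pi\in\Pi_{\mathrm{mkv}}$ yields $(x_h,a_h)=(x,a)$. Incentivized RL. A prior $\mathbf{p}$ over models is known to all; $\mu_\star\sim\mathbf{p}$ is unknown. In each episode $k$: the principal chooses a signal $\sigma_k$ via a known algorithm from past trajectories; agent $k$ chooses $\pi_k\in\arg\max_{\pi\in\Pi_{\mathrm{mkv}}}\mathbb{E}[V(\pi,\mu_\star)\mid\sigma_k]$ (fixed known tie-breaking; expectation over all randomness); $\pi_k$ is executed in $\mu_\star$ and the principal observes the trajectory $\tau_k=(x_{k;h},a_{k;h},r_{k;h},h)_h$. Prior parameters. The prior is reward-independent if the mean rewards $r_{\mu_\star}(x,a,h)$ are mutually independent across triples and independent of the transition/initial probabilities. $f_{\min}(\epsilon):=\min_{x,a,h}\Pr_{\mu_\star\sim\mathbf{p}}[r_{\mu_\star}(x,a,h)\le\epsilon]$, $r_{\min}:=\min_{x,a,h}\mathbb{E}_{\mu_\star\sim\mathbf{p}}[r_{\mu_\star}(x,a,h)]$. Algorithm (Hidden Hallucination for MDPs), inputs $N_{\mathrm{ph}},n_{\mathrm{lrn}},\varepsilon_{\mathrm{pun}}$. Phase $\ell$ consists of episodes $(\ell-1)N_{\mathrm{ph}}+1,\dots,\ell N_{\mathrm{ph}}$, and a hallucination episode $k_\ell$ is drawn uniformly from it. A triple is fully explored at phase $\ell$ if visited in at least $n_{\mathrm{lrn}}$ of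 the episodes $k_1,\dots,k_{\ell-1}$, under-explored otherwise. Raw ledger at phase $\ell$: the pairs $(\pi_{k_j},\tau_{k_j})$, $j<\ell$; censored ledger $\lambda_{\mathrm{cens},\ell}$: all rewards removed; honest ledger $\lambda_{\mathrm{hon},\ell}$: rewards kept only at fully explored triples. Punish event $\mathcal{E}_{\mathrm{pun},\ell}=\{r_{\mu_\star}(x,a,h)\le\varepsilon_{\mathrm{pun}}$ for all fully explored $(x,a,h)\}$. At $k=k_\ell$, draw $\mu_{\mathrm{hal},\ell}$ from the posterior of $\mu_\star$ given $\lambda_{\mathrm{cens},\ell}$ and $\mathcal{E}_{\mathrm{pun},\ell}$, and form the hallucinated ledger $\lambda_{\mathrm{hal},\ell}$: rewards removed at under-explored triples, each occurrence of a fully explored triple $(x,a,h)$ given an independent reward drawn from $R_{\mu_{\mathrm{hal},\ell}}(x,a,h)$. The signal is $\lambda_{\mathrm{hal},\ell}$ at $k=k_\ell$ and $\lambda_{\mathrm{hon},\ell}$ at other episodes of phase $\ell$. *)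

theory Defs
  imports "HOL-Probability.Probability"
begin

text \<open>Conventions: states are 0..<S, actions 0..<A, stages 0..<H (0-indexed).
  Phases are 0-indexed as well: phase l (0-based) is phase l+1 of the paper.\<close>

type_synonym policy = "nat \<Rightarrow> nat \<Rightarrow> nat"            \<comment> \<open>pi x h = action\<close>
type_synonym tstep = "nat \<times> nat \<times> real option \<times> nat" \<comment> \<open>(x, a, reward or removed, h)\<close>
type_synonym entry = "policy \<times> tstep list"
type_synonym ledger = "entry list"

text \<open>Deterministic MDP model: initial state, transition function, reward function
  (a deterministic model has point-mass reward distributions, whose mean is rew).\<close>
datatype dmodel = DM (init: nat) (trans: "nat \<Rightarrow> nat \<Rightarrow> nat \<Rightarrow> nat") (rew: "nat \<Rightarrow> nat \<Rightarrow> nat \<Rightarrow> real")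

definition triples :: "nat \<Rightarrow> nat \<Rightarrow> nat \<Rightarrow> (nat \<times> nat \<times> nat) set" where
  "triples S A H = {..<S} \<times> {..<A} \<times> {..<H}"

definition valid_model :: "nat \<Rightarrow> nat \<Rightarrow> nat \<Rightarrow> dmodel \<Rightarrow> bool" where
  "valid_model S A H \<mu> \<longleftrightarrow> init \<mu> < S \<and>
     (\<forall>x<S. \<forall>a<A. \<forall>h<H. trans \<mu> x a h < S \<and> 0 \<le> rew \<mu> x a h \<and> rew \<mu> x a h \<le> 1)"

text \<open>Deterministic Markov policies (normalised to 0 outside [S] x [H], so the set is finite).\<close>
definition policies :: "nat \<Rightarrow> nat \<Rightarrow> nat \<Rightarrow> policy set" where
  "policies S A H = {\<pi>. \<forall>x h. (x < S \<and> h < H \<longrightarrow> \<pi> x h < A) \<and> (\<not> (x < S \<and> h < H) \<longrightarrow> \<pi> x h = 0)}"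

primrec st :: "dmodel \<Rightarrow> policy \<Rightarrow> nat \<Rightarrow> nat" where
  "st \<mu> \<pi> 0 = init \<mu>"
| "st \<mu> \<pi> (Suc h) = trans \<mu> (st \<mu> \<pi> h) (\<pi> (st \<mu> \<pi> h) h) h"

definition raw_traj :: "nat \<Rightarrow> dmodel \<Rightarrow> policy \<Rightarrow> tstep list" where
  "raw_traj H \<mu> \<pi> = map (\<lambda>h. (st \<mu> \<pi> h, \<pi> (st \<mu> \<pi> h) h,
       Some (rew \<mu> (st \<mu> \<pi> h) (\<pi> (st \<mu> \<pi> h) h) h), h)) [0..<H]"

definition visits :: "nat \<Rightarrow> dmodel \<Rightarrow> policy \<Rightarrow> (nat \<times> nat \<times> nat) set" where
  "visits H \<mu> \<pi> = {(st \<mu> \<pi> h, \<pi> (st \<mu> \<pi> h) h, h) | h. h < H}"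

definition episode_value :: "nat \<Rightarrow> policy \<Rightarrow> dmodel \<Rightarrow> real" where
  "episode_value H \<pi> \<mu> = (\<Sum>h<H. rew \<mu> (st \<mu> \<pi> h) (\<pi> (st \<mu> \<pi> h) h) h)"

definition reachable :: "nat \<Rightarrow> nat \<Rightarrow> nat \<Rightarrow> dmodel \<Rightarrow> (nat \<times> nat \<times> nat) set" where
  "reachable S A H \<mu> = (\<Union>\<pi>\<in>policies S A H. visits H \<mu> \<pi>)"

definition dyn :: "nat \<Rightarrow> nat \<Rightarrow> nat \<Rightarrow> dmodel \<Rightarrow> nat \<times> (nat \<Rightarrow> nat \<Rightarrow> nat \<Rightarrow> nat)" where
  "dyn S A H \<mu> = (init \<mu>, \<lambda>x a h. if x < S \<and> a < A \<and> h < H then trans \<mu> x a h else 0)"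

definition rew3 :: "dmodel \<Rightarrow> nat \<times> nat \<times> nat \<Rightarrow> real" where
  "rew3 \<mu> t = (case t of (x, a, h) \<Rightarrow> rew \<mu> x a h)"

definition reward_indep :: "nat \<Rightarrow> nat \<Rightarrow> nat \<Rightarrow> dmodel pmf \<Rightarrow> bool" where
  "reward_indep S A H p \<longleftrightarrow>
     (\<forall>E B. measure_pmf.prob p {\<mu>. dyn S A H \<mu> \<in> E \<and> (\<forall>t\<in>triples S A H. rew3 \<mu> t \<in> B t)}
        = measure_pmf.prob p {\<mu>. dyn S A H \<mu> \<in> E} *
          (\<Prod>t\<in>triples S A H. measure_pmf.prob p {\<mu>. rew3 \<mu> t \<in> B t}))"

definition f_min :: "nat \<Rightarrow> nat \<Rightarrow> nat \<Rightarrow> dmodel pmf \<Rightarrow> real \<Rightarrow> real" where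
  "f_min S A H p \<epsilon> = Min ((\<lambda>t. measure_pmf.prob p {\<mu>. rew3 \<mu> t \<le> \<epsilon>}) ` triples S A H)"

definition r_min :: "nat \<Rightarrow> nat \<Rightarrow> nat \<Rightarrow> dmodel pmf \<Rightarrow> real" where
  "r_min S A H p = Min ((\<lambda>t. measure_pmf.expectation p (\<lambda>\<mu>. rew3 \<mu> t)) ` triples S A H)"

definition ent_visits :: "entry \<Rightarrow> (nat \<times> nat \<times> nat) set" where
  "ent_visits e = {(x, a, h) | x a r h. (x, a, r, h) \<in> set (snd e)}"

definition explored :: "nat \<Rightarrow> ledger \<Rightarrow> (nat \<times> nat \<times> nat) set" where
  "explored n L = {t. n \<le> length (filter (\<lambda>e. t \<in> ent_visits e) L)}"

definition set_rewards :: "(nat \<times> nat \<times> nat \<Rightarrow> real option \<Rightarrow> real option) \<Rightarrow> ledger \<Rightarrow> ledger" where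
  "set_rewards f L = map (\<lambda>(\<pi>, tr). (\<pi>, map (\<lambda>(x, a, r, h). (x, a, f (x, a, h) r, h)) tr)) L"

definition cens :: "ledger \<Rightarrow> ledger" where
  "cens L = set_rewards (\<lambda>_ _. None) L"

definition hon :: "nat \<Rightarrow> ledger \<Rightarrow> ledger" where
  "hon n L = set_rewards (\<lambda>t r. if t \<in> explored n L then r else None) L"

definition hal :: "nat \<Rightarrow> ledger \<Rightarrow> dmodel \<Rightarrow> ledger" where
  "hal n L \<mu>h = set_rewards (\<lambda>t r. if t \<in> explored n L then Some (rew3 \<mu>h t) else None) L"

definition pun :: "nat \<Rightarrow> real \<Rightarrow> dmodel \<Rightarrow> ledger \<Rightarrow> bool" where
  "pun n \<epsilon> \<mu> L \<longleftrightarrow> (\<forall>t\<in>explored n L. rew3 \<mu> t \<le> \<epsilon>)"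

text \<open>Dl is the joint law of (true model, raw ledger) at the start of a phase.
  Posterior of mu* given the censored ledger and the punish event.\<close>
definition post :: "nat \<Rightarrow> real \<Rightarrow> (dmodel \<times> ledger) pmf \<Rightarrow> ledger \<Rightarrow> dmodel pmf" where
  "post n \<epsilon> Dl L =
    (let E = {(\<mu>, L'). cens L' = cens L \<and> pun n \<epsilon> \<mu> L'} in
     if set_pmf Dl \<inter> E \<noteq> {} then map_pmf fst (cond_pmf Dl E) else map_pmf fst Dl)"

text \<open>Joint law of (mu*, signal) seen by an agent of the phase: with probability 1/N_ph
  the agent is the hallucination episode (signal = hallucinated ledger), otherwise
  the signal is the honest ledger.\<close>
definition sigJ :: "nat \<Rightarrow> nat \<Rightarrow> real \<Rightarrow> (dmodel \<times> ledger) pmf \<Rightarrow> (dmodel \<times> ledger) pmf" where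
  "sigJ N n \<epsilon> Dl = bind_pmf Dl (\<lambda>(\<mu>, L). bind_pmf (bernoulli_pmf (1 / real N)) (\<lambda>b.
      if b then map_pmf (\<lambda>\<mu>h. (\<mu>, hal n L \<mu>h)) (post n \<epsilon> Dl L)
      else return_pmf (\<mu>, hon n L)))"

definition cond_exp_value :: "nat \<Rightarrow> (dmodel \<times> ledger) pmf \<Rightarrow> ledger \<Rightarrow> policy \<Rightarrow> real" where
  "cond_exp_value H J \<sigma> \<pi> =
     measure_pmf.expectation (cond_pmf J {\<omega>. snd \<omega> = \<sigma>}) (\<lambda>\<omega>. episode_value H \<pi> (fst \<omega>))"

definition agent :: "nat \<Rightarrow> nat \<Rightarrow> nat \<Rightarrow> (policy set \<Rightarrow> policy) \<Rightarrow> (dmodel \<times> ledger) pmf \<Rightarrow> ledger \<Rightarrow> policy" where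
  "agent S A H tb J \<sigma> = tb {\<pi> \<in> policies S A H. \<forall>\<pi>'\<in>policies S A H.
       cond_exp_value H J \<sigma> \<pi>' \<le> cond_exp_value H J \<sigma> \<pi>}"

definition hh_step :: "nat \<Rightarrow> nat \<Rightarrow> nat \<Rightarrow> nat \<Rightarrow> nat \<Rightarrow> real \<Rightarrow> (policy set \<Rightarrow> policy)
    \<Rightarrow> (dmodel \<times> ledger) pmf \<Rightarrow> dmodel \<times> ledger \<Rightarrow> (dmodel \<times> ledger) pmf" where
  "hh_step S A H N n \<epsilon> tb Dl \<omega> = (case \<omega> of (\<mu>, L) \<Rightarrow>
     map_pmf (\<lambda>\<mu>h. let \<pi> = agent S A H tb (sigJ N n \<epsilon> Dl) (hal n L \<mu>h)
                    in (\<mu>, L @ [(\<pi>, raw_traj H \<mu> \<pi>)])) (post n \<epsilon> Dl L))"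

primrec hh_dist :: "nat \<Rightarrow> nat \<Rightarrow> nat \<Rightarrow> nat \<Rightarrow> nat \<Rightarrow> real \<Rightarrow> (policy set \<Rightarrow> policy)
    \<Rightarrow> dmodel pmf \<Rightarrow> nat \<Rightarrow> (dmodel \<times> ledger) pmf" where
  "hh_dist S A H N n \<epsilon> tb p 0 = map_pmf (\<lambda>\<mu>. (\<mu>, [])) p"
| "hh_dist S A H N n \<epsilon> tb p (Suc l) =
     bind_pmf (hh_dist S A H N n \<epsilon> tb p l) (hh_step S A H N n \<epsilon> tb (hh_dist S A H N n \<epsilon> tb p l))"

text \<open>Policy of the (identical) non-hallucination episodes of phase l.\<close>
definition honest_pol :: "nat \<Rightarrow> nat \<Rightarrow> nat \<Rightarrow> nat \<Rightarrow> nat \<Rightarrow> real \<Rightarrow> (policy set \<Rightarrow> policy)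
    \<Rightarrow> dmodel pmf \<Rightarrow> nat \<Rightarrow> ledger \<Rightarrow> policy" where
  "honest_pol S A H N n \<epsilon> tb p l L =
     agent S A H tb (sigJ N n \<epsilon> (hh_dist S A H N n \<epsilon> tb p l)) (hon n (take l L))"

text \<open>Triples visited in some episode of phase l (hallucination episode + the others).\<close>
definition phase_visits :: "nat \<Rightarrow> nat \<Rightarrow> nat \<Rightarrow> nat \<Rightarrow> nat \<Rightarrow> real \<Rightarrow> (policy set \<Rightarrow> policy)
    \<Rightarrow> dmodel pmf \<Rightarrow> nat \<Rightarrow> dmodel \<times> ledger \<Rightarrow> (nat \<times> nat \<times> nat) set" where
  "phase_visits S A H N n \<epsilon> tb p l \<omega> =
     ent_visits (snd \<omega> ! l) \<union> visits H (fst \<omega>) (honest_pol S A H N n \<epsilon> tb p l (snd \<omega>))"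

end

theory Submission
  imports Defs
begin


lemma final_arith:
  fixes N W \<Phi> Z Y K R0 r H F1 F2 :: real
  assumes N1: "N \<ge> 1" and K: "0 < K" "K \<le> 1" and r: "0 < r" "r \<le> R0" "R0 \<le> 1" "1 \<le> H"
    and Phi: "\<Phi> > 0" and Z: "Z > 0" and W: "W \<ge> 0" and Y: "Y \<ge> \<Phi> * K" and WY: "W \<le> Z / Y"
    and Nge: "N \<ge> 6 * H / (r * K)"
    and F1: "F1 \<ge> (1/N) * W * \<Phi> * R0 + (1 - 1/N) * Z * R0"
    and F2: "F2 \<le> (1/N) * W * H * \<Phi> + (1 - 1/N) * (r/2) * Z"
    and le: "F1 \<le> F2"
  shows False
proof -
  define a where "a = 1 / N"
  have a: "0 < a" "a \<le> 1" using N1 by (auto simp: a_def)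
  have Ypos: "Y > 0" using Y Phi K by (smt (verit) mult_pos_pos)
  have WPhi: "W * \<Phi> \<le> Z / K"
  proof -
    have "W * \<Phi> \<le> (Z / Y) * \<Phi>" using WY Phi by (intro mult_right_mono) auto
    also have "\<dots> = Z * (\<Phi> / Y)" by simp
    also have "\<Phi> / Y \<le> 1 / K" using Y Ypos K Phi by (simp add: field_simps)
    then have "Z * (\<Phi> / Y) \<le> Z * (1 / K)" using Z by (intro mult_left_mono) auto
    finally show ?thesis by simp
  qed
  have d: "F1 - F2 \<ge> a * (W * \<Phi>) * (R0 - H) + (1 - a) * Z * (R0 - r/2)"
  proof -
    have "a * (W * \<Phi>) * (R0 - H) + (1 - a) * Z * (R0 - r/2) = ((1/N) * W * \<Phi> * R0 + (1 - 1/N) * Z * R0) - ((1/N) * W * H * \<Phi> + (1 - 1/N) * (r/2) * Z)"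
      unfolding a_def by (simp add: algebra_simps add_divide_distrib[symmetric])
    then show ?thesis using F1 F2 by linarith
  qed
  have t1: "a * (W * \<Phi>) * (R0 - H) \<ge> a * (Z / K) * (r - H)"
  proof -
    have "a * (W * \<Phi>) * (R0 - H) \<ge> a * (Z / K) * (R0 - H)"
      using WPhi a r by (intro mult_right_mono_neg mult_left_mono) auto
    moreover have "a * (Z / K) * (R0 - H) \<ge> a * (Z / K) * (r - H)"
      using a Z K r by (intro mult_left_mono) auto
    ultimately show ?thesis by linarith
  qed
  have t2: "(1 - a) * Z * (R0 - r/2) \<ge> (1 - a) * Z * (r / 2)"
    using a Z r by (intro mult_left_mono) auto
  have NrK: "N * r * K \<ge> 6 * H" using Nge r K by (simp add: field_simps)
  have key: "(N - 1) * r * K > 2 * (H - r)"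
  proof -
    have "r * K \<le> r" using r K by (simp add: mult_left_le)
    moreover have "(N - 1) * r * K = N * r * K - r * K" by (simp add: algebra_simps)
    ultimately show ?thesis using NrK r by (smt (verit))
  qed
  have pos: "(1 - a) * (r / 2) - a * (H - r) / K > 0"
  proof -
    have "(1 - a) * (r / 2) - a * (H - r) / K = ((N - 1) * r * K - 2 * (H - r)) / (2 * N * K)"
      using N1 K unfolding a_def by (simp add: field_simps)
    also have "\<dots> > 0" using key N1 K by (intro divide_pos_pos) auto
    finally show ?thesis .
  qed
  have "F1 - F2 \<ge> Z * ((1 - a) * (r / 2) - a * (H - r) / K)"
  proof -
    have "a * (Z / K) * (r - H) + (1 - a) * Z * (r / 2) = Z * ((1 - a) * (r / 2) - a * (H - r) / K)"
      using K by (simp add: field_simps)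
    then show ?thesis using d t1 t2 by linarith
  qed
  moreover have "Z * ((1 - a) * (r / 2) - a * (H - r) / K) > 0" using Z pos by simp
  ultimately show False using le by linarith
qed


lemma cond_integral:
  fixes f :: "'a \<Rightarrow> real"
  assumes "set_pmf p \<inter> s \<noteq> {}"
  shows "measure_pmf.expectation (cond_pmf p s) f = measure_pmf.expectation p (\<lambda>x. indicator s x * f x) / measure p s"
proof -
  have pos: "measure p s > 0" using assms measure_pmf_posI by fastforce
  have "measure_pmf (cond_pmf p s) = uniform_measure (measure_pmf p) s"
    using assms by (simp add: cond_pmf.rep_eq)
  also have "\<dots> = density (measure_pmf p) (\<lambda>x. ennreal (indicator s x / measure p s))"
    unfolding uniform_measure_def
    by (intro density_cong) (auto simp: measure_pmf.emeasure_eq_measure divide_ennreal[symmetric] pos split: split_indicator)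
  finally have "measure_pmf.expectation (cond_pmf p s) f = measure_pmf.expectation p (\<lambda>x. (indicator s x / measure p s) * f x)"
    by (simp add: integral_density)
  also have "\<dots> = measure_pmf.expectation p (\<lambda>x. indicator s x * f x) / measure p s"
    by (simp add: )
  finally show ?thesis .
qed

lemma int_bind_pmf_global:
  fixes f :: "'b \<Rightarrow> real"
  assumes "\<And>x. \<bar>f x\<bar> \<le> B"
  shows "measure_pmf.expectation (bind_pmf M N) f = measure_pmf.expectation M (\<lambda>x. measure_pmf.expectation (N x) f)"
proof -
  have "measure_pmf.expectation (bind_pmf M N) f = integral\<^sup>L (measure_pmf M \<bind> (\<lambda>x. measure_pmf (N x))) f"
    by (simp add: measure_pmf_bind)
  also have "\<dots> = measure_pmf.expectation M (\<lambda>x. measure_pmf.expectation (N x) f)"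
    apply (rule integral_bind[where K="count_space UNIV" and B=B and B'=1])
    using assms by (auto simp: space_subprob_algebra measure_pmf.subprob_space_axioms intro!: measure_pmf.finite_measure_axioms)
  finally show ?thesis .
qed

lemma int_bind_pmf:
  fixes f :: "'b \<Rightarrow> real"
  assumes "\<And>x. x \<in> set_pmf (bind_pmf M N) \<Longrightarrow> \<bar>f x\<bar> \<le> B"
  shows "measure_pmf.expectation (bind_pmf M N) f = measure_pmf.expectation M (\<lambda>x. measure_pmf.expectation (N x) f)"
proof -
  define g where "g x = (if x \<in> set_pmf (bind_pmf M N) then f x else 0)" for x
  have gb: "\<bar>g x\<bar> \<le> \<bar>B\<bar>" for x using assms by (auto simp: g_def) (meson abs_ge_self order_trans)
  have "measure_pmf.expectation (bind_pmf M N) f = measure_pmf.expectation (bind_pmf M N) g"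
    by (intro integral_cong_AE) (auto simp: g_def AE_measure_pmf_iff)
  also have "\<dots> = measure_pmf.expectation M (\<lambda>x. measure_pmf.expectation (N x) g)"
    by (rule int_bind_pmf_global[OF gb])
  also have "\<dots> = measure_pmf.expectation M (\<lambda>x. measure_pmf.expectation (N x) f)"
    by (intro integral_cong_AE) (auto simp: g_def AE_measure_pmf_iff intro!: integral_cong_AE)
  finally show ?thesis .
qed

lemma int_mono_pmf:
  fixes f g :: "'b \<Rightarrow> real"
  assumes "\<And>x. x \<in> set_pmf M \<Longrightarrow> \<bar>f x\<bar> \<le> B" "\<And>x. x \<in> set_pmf M \<Longrightarrow> \<bar>g x\<bar> \<le> B"
    "\<And>x. x \<in> set_pmf M \<Longrightarrow> f x \<le> g x"
  shows "measure_pmf.expectation M f \<le> measure_pmf.expectation M g"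
  apply (rule integral_mono_AE)
  using assms by (auto intro!: measure_pmf.integrable_const_bound[where B=B] simp: AE_measure_pmf_iff)


lemma finite_triples: "finite (triples S A H)" by (simp add: triples_def)

lemma law_factor:
  assumes ri: "reward_indep S A H p"
  defines "T \<equiv> triples S A H"
  shows "map_pmf (\<lambda>\<mu>. (dyn S A H \<mu>, \<lambda>t. if t \<in> T then rew3 \<mu> t else 0)) p
    = pair_pmf (map_pmf (dyn S A H) p) (Pi_pmf T 0 (\<lambda>t. map_pmf (\<lambda>\<mu>. rew3 \<mu> t) p))"
proof (rule pmf_eqI)
  fix z :: "(nat \<times> (nat \<Rightarrow> nat \<Rightarrow> nat \<Rightarrow> nat)) \<times> (nat \<times> nat \<times> nat \<Rightarrow> real)"
  obtain d v where z: "z = (d, v)" by (cases z)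
  show "pmf (map_pmf (\<lambda>\<mu>. (dyn S A H \<mu>, \<lambda>t. if t \<in> T then rew3 \<mu> t else 0)) p) z =
        pmf (pair_pmf (map_pmf (dyn S A H) p) (Pi_pmf T 0 (\<lambda>t. map_pmf (\<lambda>\<mu>. rew3 \<mu> t) p))) z"
  proof (cases "\<forall>x. x \<notin> T \<longrightarrow> v x = 0")
    case True
    have pre: "(\<lambda>\<mu>. (dyn S A H \<mu>, \<lambda>t. if t \<in> T then rew3 \<mu> t else 0)) -` {z}
        = {\<mu>. dyn S A H \<mu> \<in> {d} \<and> (\<forall>t\<in>T. rew3 \<mu> t \<in> {v t})}"
      using True by (auto simp: z fun_eq_iff)
    have "pmf (map_pmf (\<lambda>\<mu>. (dyn S A H \<mu>, \<lambda>t. if t \<in> T then rew3 \<mu> t else 0)) p) z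
       = measure_pmf.prob p {\<mu>. dyn S A H \<mu> \<in> {d} \<and> (\<forall>t\<in>T. rew3 \<mu> t \<in> {v t})}"
      by (simp only: pmf_map pre)
    then show ?thesis
      using ri[unfolded reward_indep_def, rule_format, of "{d}" "\<lambda>t. {v t}"] True
      by (simp add: z pmf_pair pmf_Pi T_def finite_triples pmf_map vimage_def)
  next
    case False
    have pre: "(\<lambda>\<mu>. (dyn S A H \<mu>, \<lambda>t. if t \<in> T then rew3 \<mu> t else 0)) -` {z} = {}"
      using False by (auto simp: z fun_eq_iff)
    have "pmf (map_pmf (\<lambda>\<mu>. (dyn S A H \<mu>, \<lambda>t. if t \<in> T then rew3 \<mu> t else 0)) p) z = 0"
      by (simp only: pmf_map pre measure_empty)
    then show ?thesis using False
      by (simp add: z pmf_pair pmf_Pi T_def finite_triples) blast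
  qed
qed

lemma int_pair_prod:
  fixes u :: "'a \<Rightarrow> real" and w :: "'b \<Rightarrow> real"
  assumes "\<And>a. a \<in> set_pmf P \<Longrightarrow> \<bar>u a\<bar> \<le> B1" "\<And>b. b \<in> set_pmf Q \<Longrightarrow> \<bar>w b\<bar> \<le> B2"
  shows "measure_pmf.expectation (pair_pmf P Q) (\<lambda>(a,b). u a * w b)
     = measure_pmf.expectation P u * measure_pmf.expectation Q w"
proof -
  have B2: "0 \<le> B2" if "set_pmf Q \<noteq> {}" using assms(2) that by (meson abs_ge_zero all_not_in_conv order_trans)
  have "measure_pmf.expectation (pair_pmf P Q) (\<lambda>(a,b). u a * w b)
      = measure_pmf.expectation P (\<lambda>a. measure_pmf.expectation (bind_pmf Q (\<lambda>b. return_pmf (a, b))) (\<lambda>(a,b). u a * w b))"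
    unfolding pair_pmf_def
    apply (rule int_bind_pmf[where B="B1 * B2"])
    using assms by (auto simp: abs_mult set_pair_pmf[unfolded pair_pmf_def] intro!: mult_mono)
       (meson abs_ge_zero order_trans)
  also have "\<dots> = measure_pmf.expectation P (\<lambda>a. u a * measure_pmf.expectation Q w)"
  proof (intro integral_cong_AE)
    show "AE x in measure_pmf P. measure_pmf.expectation (bind_pmf Q (\<lambda>b. return_pmf (x, b))) (\<lambda>(a, b). u a * w b) = u x * measure_pmf.expectation Q w"
    proof (rule AE_pmfI)
      fix a assume a: "a \<in> set_pmf P"
      have "measure_pmf.expectation (bind_pmf Q (\<lambda>b. return_pmf (a, b))) (\<lambda>(a, b). u a * w b)
         = measure_pmf.expectation (map_pmf (\<lambda>b. (a,b)) Q) (\<lambda>(a, b). u a * w b)"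
        by (simp add: map_pmf_def)
      also have "\<dots> = measure_pmf.expectation Q (\<lambda>b. u a * w b)" by simp
      also have "\<dots> = u a * measure_pmf.expectation Q w" by simp
      finally show "measure_pmf.expectation (bind_pmf Q (\<lambda>b. return_pmf (a, b))) (\<lambda>(a, b). u a * w b) = u a * measure_pmf.expectation Q w" .
    qed
  qed auto
  also have "\<dots> = measure_pmf.expectation P u * measure_pmf.expectation Q w" by simp
  finally show ?thesis .
qed

lemma indep_int:
  fixes g :: "dmodel \<Rightarrow> real" and k :: "nat \<times> nat \<times> nat \<Rightarrow> real \<Rightarrow> real"
  assumes ri: "reward_indep S A H p"
  and g: "\<And>\<mu>. \<mu> \<in> set_pmf p \<Longrightarrow> g \<mu> = g' (dyn S A H \<mu>)"
  and gb: "\<And>\<mu>. \<mu> \<in> set_pmf p \<Longrightarrow> \<bar>g \<mu>\<bar> \<le> B"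
  and kb: "\<And>t \<mu>. t \<in> triples S A H \<Longrightarrow> \<mu> \<in> set_pmf p \<Longrightarrow> 0 \<le> k t (rew3 \<mu> t) \<and> k t (rew3 \<mu> t) \<le> B'"
  shows "measure_pmf.expectation p (\<lambda>\<mu>. g \<mu> * (\<Prod>t\<in>triples S A H. k t (rew3 \<mu> t)))
    = measure_pmf.expectation p g * (\<Prod>t\<in>triples S A H. measure_pmf.expectation p (\<lambda>\<mu>. k t (rew3 \<mu> t)))"
proof -
  define T where "T = triples S A H"
  define X where "X \<mu> = (dyn S A H \<mu>, \<lambda>t. if t \<in> T then rew3 \<mu> t else 0)" for \<mu>
  define F where "F = (\<lambda>(d, v). g' d * (\<Prod>t\<in>T. k t (v t)))"
  have fT: "finite T" by (simp add: T_def finite_triples)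
  have "measure_pmf.expectation p (\<lambda>\<mu>. g \<mu> * (\<Prod>t\<in>triples S A H. k t (rew3 \<mu> t)))
      = measure_pmf.expectation p (\<lambda>\<mu>. F (X \<mu>))"
    by (intro integral_cong_AE) (auto simp: AE_measure_pmf_iff F_def X_def g T_def intro!: prod.cong)
  also have "\<dots> = measure_pmf.expectation (map_pmf X p) F" by simp
  also have "map_pmf X p = pair_pmf (map_pmf (dyn S A H) p) (Pi_pmf T 0 (\<lambda>t. map_pmf (\<lambda>\<mu>. rew3 \<mu> t) p))"
    unfolding X_def T_def by (rule law_factor[OF ri])
  also have "measure_pmf.expectation \<dots> F
     = measure_pmf.expectation (map_pmf (dyn S A H) p) g' *
       measure_pmf.expectation (Pi_pmf T 0 (\<lambda>t. map_pmf (\<lambda>\<mu>. rew3 \<mu> t) p)) (\<lambda>v. \<Prod>t\<in>T. k t (v t))"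
    unfolding F_def
  proof (rule int_pair_prod[of _ _ B _ _ "B' ^ card T"], goal_cases)
    case (1 a)
    then obtain \<mu> where "\<mu> \<in> set_pmf p" "a = dyn S A H \<mu>" by auto
    then show ?case using gb g by metis
  next
    case (2 v)
    then have v: "\<And>t. t \<in> T \<Longrightarrow> \<exists>\<mu>\<in>set_pmf p. v t = rew3 \<mu> t"
      by (force simp: set_Pi_pmf[OF fT] PiE_dflt_def)
    have "\<bar>\<Prod>t\<in>T. k t (v t)\<bar> = (\<Prod>t\<in>T. \<bar>k t (v t)\<bar>)" by (simp add: abs_prod)
    also have "\<dots> \<le> (\<Prod>t\<in>T. B')"
      by (intro prod_mono) (use v kb in \<open>fastforce simp: T_def\<close>)
    finally show ?case by simp
  qed
  also have "measure_pmf.expectation (map_pmf (dyn S A H) p) g' = measure_pmf.expectation p g"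
    by (simp) (intro integral_cong_AE, auto simp: AE_measure_pmf_iff g)
  also have "measure_pmf.expectation (Pi_pmf T 0 (\<lambda>t. map_pmf (\<lambda>\<mu>. rew3 \<mu> t) p)) (\<lambda>v. \<Prod>t\<in>T. k t (v t))
     = (\<Prod>t\<in>T. measure_pmf.expectation (map_pmf (\<lambda>\<mu>. rew3 \<mu> t) p) (k t))"
  proof (rule expectation_prod_Pi_pmf[OF fT])
    fix t assume t: "t \<in> T"
    show "integrable (measure_pmf (map_pmf (\<lambda>\<mu>. rew3 \<mu> t) p)) (k t)"
      by (rule measure_pmf.integrable_const_bound[where B=B']) (use kb t in \<open>auto simp: AE_measure_pmf_iff T_def\<close>)
    fix y assume "y \<in> set_pmf (map_pmf (\<lambda>\<mu>. rew3 \<mu> t) p)"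
    then show "0 \<le> k t y" using kb[of t] t by (auto simp: T_def)
  qed
  also have "\<dots> = (\<Prod>t\<in>T. measure_pmf.expectation p (\<lambda>\<mu>. k t (rew3 \<mu> t)))" by simp
  finally show ?thesis by (simp add: T_def)
qed


definition mkL :: "nat \<Rightarrow> dmodel \<Rightarrow> policy list \<Rightarrow> ledger" where
  "mkL H \<mu> pols = map (\<lambda>\<pi>. (\<pi>, raw_traj H \<mu> \<pi>)) pols"

lemma set_rewards_comp: "set_rewards f (set_rewards g L) = set_rewards (\<lambda>t r. f t (g t r)) L"
  by (induction L) (auto simp: set_rewards_def)

lemma ent_visits_sr: "ent_visits (\<pi>, map (\<lambda>(x,a,r,h). (x,a,f (x,a,h) r,h)) tr) = ent_visits (\<pi>, tr)"
  by (force simp: ent_visits_def)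

lemma explored_sr: "explored n (set_rewards f L) = explored n L"
proof -
  have "length (filter (\<lambda>e. t \<in> ent_visits e) (set_rewards f L)) = length (filter (\<lambda>e. t \<in> ent_visits e) L)" for t
    by (induction L) (auto simp: set_rewards_def ent_visits_sr split: prod.splits)
  then show ?thesis by (simp add: explored_def)
qed

lemma cens_sr: "cens (set_rewards f L) = cens L"
  unfolding cens_def set_rewards_comp ..

lemma cens_hal[simp]: "cens (hal n L \<mu>) = cens L" by (simp add: hal_def cens_sr)
lemma cens_cens[simp]: "cens (cens L) = cens L" by (simp add: cens_def cens_sr[unfolded cens_def])
lemma explored_cens[simp]: "explored n (cens L) = explored n L" by (simp add: cens_def explored_sr)

lemma hal_cens: "hal n (cens L) \<mu> = hal n L \<mu>"
  unfolding hal_def explored_cens by (simp add: cens_def set_rewards_comp)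

lemma post_cens: "post n \<epsilon> D (cens L) = post n \<epsilon> D L"
  unfolding post_def by simp

lemma sr_eqD: "set_rewards f L = set_rewards g L \<Longrightarrow> e \<in> set L \<Longrightarrow> (x,a,r,h) \<in> set (snd e)
   \<Longrightarrow> f (x,a,h) r = g (x,a,h) r"
proof (induction L)
  case (Cons e' L)
  show ?case
  proof (cases "e = e'")
    case True
    obtain \<pi> tr where e': "e' = (\<pi>, tr)" by (cases e')
    from Cons.prems(1) have "map (\<lambda>(x,a,r,h). (x,a,f (x,a,h) r,h)) tr = map (\<lambda>(x,a,r,h). (x,a,g (x,a,h) r,h)) tr"
      by (simp add: set_rewards_def e')
    then show ?thesis using Cons.prems True e' by (force simp: map_eq_conv)
  next
    case False
    then show ?thesis using Cons by (simp add: set_rewards_def)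
  qed
qed simp

lemma sr_cong: "(\<And>e x a r h. e \<in> set L \<Longrightarrow> (x,a,r,h) \<in> set (snd e) \<Longrightarrow> f (x,a,h) r = g (x,a,h) r)
   \<Longrightarrow> set_rewards f L = set_rewards g L"
  unfolding set_rewards_def by (force intro!: map_cong)

lemma explored1: "explored (Suc 0) L = (\<Union>e\<in>set L. ent_visits e)"
proof -
  have "(Suc 0 \<le> length (filter P L)) = (\<exists>e\<in>set L. P e)" for P :: "entry \<Rightarrow> bool"
    by (metis Suc_le_eq filter_empty_conv length_greater_0_conv)
  then show ?thesis unfolding explored_def by auto
qed

lemma hal_eqD:
  assumes "hal (Suc 0) L x = hal (Suc 0) L' y"
  shows "cens L = cens L'" "\<And>t. t \<in> explored (Suc 0) L \<Longrightarrow> rew3 x t = rew3 y t"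
proof -
  show c: "cens L = cens L'" using arg_cong[OF assms, of cens] by simp
  have "hal (Suc 0) L' y = hal (Suc 0) L y" by (metis c hal_cens)
  with assms have eq: "hal (Suc 0) L x = hal (Suc 0) L y" by simp
  fix t assume t: "t \<in> explored (Suc 0) L"
  then obtain e where e: "e \<in> set L" "t \<in> ent_visits e" by (auto simp: explored1)
  then obtain xx a r h where "t = (xx,a,h)" "(xx,a,r,h) \<in> set (snd e)" by (auto simp: ent_visits_def)
  then show "rew3 x t = rew3 y t"
    using sr_eqD[OF eq[unfolded hal_def] e(1)] t by fastforce
qed

lemma hal_eqI:
  assumes "cens L = cens L'" "\<And>t. t \<in> explored (Suc 0) L \<Longrightarrow> rew3 x t = rew3 y t"
  shows "hal (Suc 0) L x = hal (Suc 0) L' y"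
proof -
  have "hal (Suc 0) L x = hal (Suc 0) L y"
    unfolding hal_def
  proof (rule sr_cong)
    fix e xx a r h assume "e \<in> set L" "(xx,a,r,h) \<in> set (snd e)"
    then have "(xx,a,h) \<in> explored (Suc 0) L" by (force simp: explored1 ent_visits_def)
    then show "(if (xx,a,h) \<in> explored (Suc 0) L then Some (rew3 x (xx,a,h)) else None) =
               (if (xx,a,h) \<in> explored (Suc 0) L then Some (rew3 y (xx,a,h)) else None)"
      using assms(2) by simp
  qed
  also have "\<dots> = hal (Suc 0) L' y" by (metis assms(1) hal_cens)
  finally show ?thesis .
qed

lemma hon_mkL: "hon n (mkL H \<mu> pols) = hal n (mkL H \<mu> pols) \<mu>"
  unfolding hon_def hal_def
  by (rule sr_cong) (auto simp: mkL_def raw_traj_def rew3_def)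

lemma ent_visits_raw: "ent_visits (\<pi>, raw_traj H \<mu> \<pi>) = visits H \<mu> \<pi>"
  by (auto simp: ent_visits_def raw_traj_def visits_def image_iff)

lemma explored_mkL: "explored (Suc 0) (mkL H \<mu> pols) = (\<Union>\<pi>\<in>set pols. visits H \<mu> \<pi>)"
  by (auto simp: explored1 mkL_def ent_visits_raw)

lemma cens_mkL: "cens (mkL H \<mu> pols) = map (\<lambda>\<pi>. (\<pi>, map (\<lambda>h. (st \<mu> \<pi> h, \<pi> (st \<mu> \<pi> h) h, None, h)) [0..<H])) pols"
  by (simp add: cens_def set_rewards_def mkL_def raw_traj_def)

lemma cens_mkL_eqD:
  assumes "cens (mkL H \<mu> pols) = cens (mkL H \<mu>' pols')"
  shows "pols = pols'" "\<And>\<pi> h. \<pi> \<in> set pols \<Longrightarrow> h < H \<Longrightarrow> st \<mu> \<pi> h = st \<mu>' \<pi> h"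
proof -
  show pp: "pols = pols'" using arg_cong[OF assms, of "map fst"] by (simp add: cens_mkL comp_def)
  fix \<pi> h assume "\<pi> \<in> set pols" "h < H"
  then show "st \<mu> \<pi> h = st \<mu>' \<pi> h" using assms unfolding cens_mkL pp
    by (auto simp: map_eq_conv)
qed

lemma mkL_snoc: "mkL H \<mu> (pols @ [\<pi>]) = mkL H \<mu> pols @ [(\<pi>, raw_traj H \<mu> \<pi>)]"
  by (simp add: mkL_def)


lemma st_lt:
  assumes "valid_model S A H \<mu>" "\<pi> \<in> policies S A H"
  shows "h \<le> H \<Longrightarrow> st \<mu> \<pi> h < S"
proof (induction h)
  case 0 then show ?case using assms by (simp add: valid_model_def)
next
  case (Suc h)
  then have "st \<mu> \<pi> h < S" "h < H" by auto
  moreover have "\<pi> (st \<mu> \<pi> h) h < A" using assms(2) calculation by (simp add: policies_def)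
  ultimately show ?case using assms(1) by (simp add: valid_model_def)
qed

lemma act_lt: "\<pi> \<in> policies S A H \<Longrightarrow> x < S \<Longrightarrow> h < H \<Longrightarrow> \<pi> x h < A"
  by (simp add: policies_def)

lemma visits_sub:
  assumes "valid_model S A H \<mu>" "\<pi> \<in> policies S A H"
  shows "visits H \<mu> \<pi> \<subseteq> triples S A H"
  using st_lt[OF assms] act_lt[OF assms(2)] by (auto simp: visits_def triples_def)

lemma reachable_sub:
  assumes "valid_model S A H \<mu>"
  shows "reachable S A H \<mu> \<subseteq> triples S A H"
  using visits_sub[OF assms] by (auto simp: reachable_def)

lemma st_dyn:
  assumes "valid_model S A H \<mu>" "valid_model S A H \<mu>'" "dyn S A H \<mu> = dyn S A H \<mu>'" "\<pi> \<in> policies S A H"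
  shows "h \<le> H \<Longrightarrow> st \<mu> \<pi> h = st \<mu>' \<pi> h"
proof (induction h)
  case 0 then show ?case using assms(3) by (simp add: dyn_def)
next
  case (Suc h)
  then have h: "h < H" and eq: "st \<mu> \<pi> h = st \<mu>' \<pi> h" by auto
  have x: "st \<mu> \<pi> h < S" using st_lt[OF assms(1,4)] h by simp
  have a: "\<pi> (st \<mu> \<pi> h) h < A" using act_lt[OF assms(4) x h] .
  have feq: "(\<lambda>x a h. if x < S \<and> a < A \<and> h < H then trans \<mu> x a h else 0) =
        (\<lambda>x a h. if x < S \<and> a < A \<and> h < H then trans \<mu>' x a h else 0)"
    using assms(3) by (simp add: dyn_def)
  have "trans \<mu> (st \<mu> \<pi> h) (\<pi> (st \<mu> \<pi> h) h) h = trans \<mu>' (st \<mu> \<pi> h) (\<pi> (st \<mu> \<pi> h) h) h"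
    using fun_cong[OF fun_cong[OF fun_cong[OF feq, of "st \<mu> \<pi> h"], of "\<pi> (st \<mu> \<pi> h) h"], of h] x a h by simp
  then show ?case using eq by simp
qed

lemma cens_mkL_dyn:
  assumes "valid_model S A H \<mu>" "valid_model S A H \<mu>'" "dyn S A H \<mu> = dyn S A H \<mu>'" "set pols \<subseteq> policies S A H"
  shows "cens (mkL H \<mu> pols) = cens (mkL H \<mu>' pols)"
  unfolding cens_mkL using st_dyn[OF assms(1-3)] assms(4)
  by (auto intro!: map_cong)

lemma rew_bounds:
  assumes "valid_model S A H \<mu>" "\<pi> \<in> policies S A H" "h < H"
  shows "0 \<le> rew \<mu> (st \<mu> \<pi> h) (\<pi> (st \<mu> \<pi> h) h) h" "rew \<mu> (st \<mu> \<pi> h) (\<pi> (st \<mu> \<pi> h) h) h \<le> 1"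
  using st_lt[OF assms(1,2), of h] act_lt[OF assms(2), of "st \<mu> \<pi> h" h] assms
  by (auto simp: valid_model_def)

lemma ev_nonneg:
  assumes "valid_model S A H \<mu>" "\<pi> \<in> policies S A H"
  shows "0 \<le> episode_value H \<pi> \<mu>"
  unfolding episode_value_def using rew_bounds[OF assms] by (intro sum_nonneg) auto

lemma ev_le:
  assumes "valid_model S A H \<mu>" "\<pi> \<in> policies S A H"
  shows "episode_value H \<pi> \<mu> \<le> real H"
proof -
  have "episode_value H \<pi> \<mu> \<le> (\<Sum>h<H. 1)"
    unfolding episode_value_def using rew_bounds(2)[OF assms] by (intro sum_mono) auto
  then show ?thesis by simp
qed

lemma ev_ge:
  assumes "valid_model S A H \<mu>" "\<pi> \<in> policies S A H" "h < H"
  shows "rew3 \<mu> (st \<mu> \<pi> h, \<pi> (st \<mu> \<pi> h) h, h) \<le> episode_value H \<pi> \<mu>"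
  unfolding episode_value_def rew3_def
  using member_le_sum[of h "{..<H}" "\<lambda>h. rew \<mu> (st \<mu> \<pi> h) (\<pi> (st \<mu> \<pi> h) h) h"] rew_bounds[OF assms(1,2)] assms(3)
  by auto

lemma ev_sum_le:
  assumes "valid_model S A H \<mu>" "\<pi> \<in> policies S A H"
    "\<And>h. h < H \<Longrightarrow> rew3 \<mu> (st \<mu> \<pi> h, \<pi> (st \<mu> \<pi> h) h, h) \<le> e"
  shows "episode_value H \<pi> \<mu> \<le> real H * e"
proof -
  have "episode_value H \<pi> \<mu> \<le> (\<Sum>h<H. e)"
    unfolding episode_value_def using assms(3) by (intro sum_mono) (auto simp: rew3_def)
  then show ?thesis by simp
qed

lemma det:
  assumes cons: "\<And>\<pi>j h. \<pi>j \<in> set pols \<Longrightarrow> h < H \<Longrightarrow> st \<mu> \<pi>j h = st \<mu>0 \<pi>j h"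
    and ne: "pols \<noteq> []"
  shows "h < H \<Longrightarrow> (\<And>h'. h' < h \<Longrightarrow> (st \<mu>0 \<pi> h', \<pi> (st \<mu>0 \<pi> h') h', h') \<in> (\<Union>\<pi>j\<in>set pols. visits H \<mu>0 \<pi>j))
    \<Longrightarrow> st \<mu> \<pi> h = st \<mu>0 \<pi> h"
proof (induction h)
  case 0
  obtain \<pi>j where "\<pi>j \<in> set pols" using ne by (cases pols) auto
  then show ?case using cons[of \<pi>j 0] 0 by simp
next
  case (Suc h)
  have IH: "st \<mu> \<pi> h = st \<mu>0 \<pi> h" using Suc by auto
  define x where "x = st \<mu>0 \<pi> h"
  define a where "a = \<pi> x h"
  have "(x, a, h) \<in> (\<Union>\<pi>j\<in>set pols. visits H \<mu>0 \<pi>j)" using Suc.prems(2)[of h] by (simp add: x_def a_def)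
  then obtain \<pi>j where pj: "\<pi>j \<in> set pols" "st \<mu>0 \<pi>j h = x" "\<pi>j x h = a"
    by (auto simp: visits_def)
  have "st \<mu> \<pi>j h = x" using cons[OF pj(1), of h] pj Suc.prems(1) by simp
  moreover have "st \<mu> \<pi>j (Suc h) = st \<mu>0 \<pi>j (Suc h)" using cons[OF pj(1) Suc.prems(1)] .
  ultimately have "trans \<mu> x a h = trans \<mu>0 x a h" using pj by simp
  then show ?case using IH by (simp add: x_def a_def)
qed

lemma finite_policies: "finite (policies S A H)"
proof (rule finite_subset)
  let ?G = "(\<lambda>g. \<lambda>x h. if x < S \<and> h < H then g (x,h) else (0::nat)) ` ({..<S}\<times>{..<H} \<rightarrow>\<^sub>E {..<A})"
  show "finite ?G" by (intro finite_imageI finite_PiE) auto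
  show "policies S A H \<subseteq> ?G"
  proof
    fix \<pi> assume p: "\<pi> \<in> policies S A H"
    have a: "\<forall>x h. x < S \<and> h < H \<longrightarrow> \<pi> x h < A" and b: "\<forall>x h. \<not> (x < S \<and> h < H) \<longrightarrow> \<pi> x h = 0"
      using p unfolding policies_def by blast+
    define g where "g = (\<lambda>(x,h)\<in>{..<S}\<times>{..<H}. \<pi> x h)"
    have "g \<in> {..<S}\<times>{..<H} \<rightarrow>\<^sub>E {..<A}" using a unfolding g_def by (simp add: PiE_iff)
    moreover have "\<pi> = (\<lambda>x h. if x < S \<and> h < H then g (x,h) else 0)"
      using b unfolding g_def by (intro ext) auto
    ultimately show "\<pi> \<in> ?G" by blast
  qed
qed

lemma pol0: "0 < A \<Longrightarrow> (\<lambda>x h. 0) \<in> policies S A H"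
  by (simp add: policies_def)

lemma agent_in:
  assumes "0 < A" "\<forall>M. M \<noteq> {} \<longrightarrow> tb M \<in> M"
  shows "agent S A H tb J \<sigma> \<in> {\<pi> \<in> policies S A H. \<forall>\<pi>'\<in>policies S A H.
       cond_exp_value H J \<sigma> \<pi>' \<le> cond_exp_value H J \<sigma> \<pi>}"
proof -
  define f where "f = cond_exp_value H J \<sigma>"
  define P where "P = policies S A H"
  have fin: "finite (f ` P)" by (simp add: finite_policies P_def)
  have ne: "f ` P \<noteq> {}" using pol0[OF assms(1)] unfolding P_def by blast
  have "Max (f ` P) \<in> f ` P" by (rule Max_in[OF fin ne])
  then obtain \<pi> where pi: "\<pi> \<in> P" "f \<pi> = Max (f ` P)" by (metis imageE)
  have "\<forall>\<pi>'\<in>P. f \<pi>' \<le> f \<pi>"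
  proof
    fix \<pi>' assume "\<pi>' \<in> P"
    then have "f \<pi>' \<in> f ` P" by (rule imageI)
    then show "f \<pi>' \<le> f \<pi>" unfolding pi(2) by (rule Max_ge[OF fin])
  qed
  then have "\<pi> \<in> {\<pi> \<in> P. \<forall>\<pi>'\<in>P. f \<pi>' \<le> f \<pi>}" using pi(1) by simp
  then have ne2: "{\<pi> \<in> P. \<forall>\<pi>'\<in>P. f \<pi>' \<le> f \<pi>} \<noteq> {}" by (rule ex_in_conv[THEN iffD1, OF exI])
  have "agent S A H tb J \<sigma> = tb {\<pi> \<in> P. \<forall>\<pi>'\<in>P. f \<pi>' \<le> f \<pi>}"
    unfolding agent_def f_def P_def ..
  also have "\<dots> \<in> {\<pi> \<in> P. \<forall>\<pi>'\<in>P. f \<pi>' \<le> f \<pi>}" by (rule assms(2)[rule_format, OF ne2])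
  finally show ?thesis unfolding f_def P_def .
qed


lemma cens_eq_hal: "cens L = cens L' \<Longrightarrow> hal n L x = hal n L' x"
proof -
  assume c: "cens L = cens L'"
  have "hal n L x = hal n (cens L) x" by (rule hal_cens[symmetric])
  also have "\<dots> = hal n (cens L') x" by (simp only: c)
  also have "\<dots> = hal n L' x" by (rule hal_cens)
  finally show ?thesis .
qed

lemma cens_eq_post: "cens L = cens L' \<Longrightarrow> post n e D L = post n e D L'"
proof -
  assume c: "cens L = cens L'"
  have "post n e D L = post n e D (cens L)" by (rule post_cens[symmetric])
  also have "\<dots> = post n e D (cens L')" by (simp only: c)
  also have "\<dots> = post n e D L'" by (rule post_cens)
  finally show ?thesis .
qed

locale hh =
  fixes S A H N :: nat and \<epsilon> :: real and tb :: "policy set \<Rightarrow> policy" and p :: "dmodel pmf"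
  assumes SAH: "S > 0" "A > 0" "H > 0"
    and valid: "\<forall>\<mu>\<in>set_pmf p. valid_model S A H \<mu>"
    and ri: "reward_indep S A H p"
    and tbp: "\<forall>M. M \<noteq> {} \<longrightarrow> tb M \<in> M"
begin

abbreviation "Dl l \<equiv> hh_dist S A H N 1 \<epsilon> tb p l"

lemma validI: "\<mu> \<in> set_pmf p \<Longrightarrow> valid_model S A H \<mu>" using valid by blast

definition invQ :: "nat \<Rightarrow> (dmodel \<Rightarrow> policy list pmf) \<Rightarrow> bool" where
  "invQ l Q \<longleftrightarrow> (\<forall>\<mu>\<in>set_pmf p. \<forall>pols\<in>set_pmf (Q \<mu>). set pols \<subseteq> policies S A H \<and> length pols = l)
     \<and> (\<forall>\<mu>\<in>set_pmf p. \<forall>\<mu>'\<in>set_pmf p. dyn S A H \<mu> = dyn S A H \<mu>' \<longrightarrow> Q \<mu> = Q \<mu>')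
     \<and> Dl l = bind_pmf p (\<lambda>\<mu>. map_pmf (\<lambda>pols. (\<mu>, mkL H \<mu> pols)) (Q \<mu>))"

lemma invQ_pol: "invQ l Q \<Longrightarrow> \<mu> \<in> set_pmf p \<Longrightarrow> pols \<in> set_pmf (Q \<mu>) \<Longrightarrow> set pols \<subseteq> policies S A H \<and> length pols = l"
  unfolding invQ_def by blast
lemma invQ_dyn: "invQ l Q \<Longrightarrow> \<mu> \<in> set_pmf p \<Longrightarrow> \<mu>' \<in> set_pmf p \<Longrightarrow> dyn S A H \<mu> = dyn S A H \<mu>' \<Longrightarrow> Q \<mu> = Q \<mu>'"
  unfolding invQ_def by blast
lemma invQ_eq: "invQ l Q \<Longrightarrow> Dl l = bind_pmf p (\<lambda>\<mu>. map_pmf (\<lambda>pols. (\<mu>, mkL H \<mu> pols)) (Q \<mu>))"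
  unfolding invQ_def by blast

lemma inv_ex: "\<exists>Q. invQ l Q"
proof (induction l)
  case 0
  show ?case
    by (rule exI[of _ "\<lambda>_. return_pmf []"]) (simp add: invQ_def map_pmf_def mkL_def bind_return_pmf)
next
  case (Suc l)
  then obtain Q where Q: "invQ l Q" by blast
  define ag where "ag = agent S A H tb (sigJ N 1 \<epsilon> (Dl l))"
  define G where "G \<mu> pols = map_pmf (\<lambda>\<mu>h. pols @ [ag (hal 1 (mkL H \<mu> pols) \<mu>h)]) (post 1 \<epsilon> (Dl l) (mkL H \<mu> pols))" for \<mu> pols
  define Q' where "Q' \<mu> = bind_pmf (Q \<mu>) (G \<mu>)" for \<mu>
  have Qd: "Dl l = bind_pmf p (\<lambda>\<mu>. map_pmf (\<lambda>pols. (\<mu>, mkL H \<mu> pols)) (Q \<mu>))"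
    using invQ_eq[OF Q] .
  have agin: "ag \<sigma> \<in> policies S A H" for \<sigma> using agent_in[OF SAH(2) tbp] unfolding ag_def by blast
  define K where "K = hh_step S A H N 1 \<epsilon> tb (Dl l)"
  have "Dl (Suc l) = bind_pmf (Dl l) K" by (simp add: K_def)
  also have "\<dots> = bind_pmf (bind_pmf p (\<lambda>\<mu>. map_pmf (\<lambda>pols. (\<mu>, mkL H \<mu> pols)) (Q \<mu>))) K"
    using Qd by simp
  also have "\<dots> = bind_pmf p (\<lambda>\<mu>. map_pmf (\<lambda>pols. (\<mu>, mkL H \<mu> pols)) (Q' \<mu>))"
    unfolding K_def
    by (simp add: bind_assoc_pmf bind_map_pmf map_bind_pmf Q'_def G_def hh_step_def Let_def map_pmf_comp mkL_snoc ag_def)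
  finally have eq: "Dl (Suc l) = bind_pmf p (\<lambda>\<mu>. map_pmf (\<lambda>pols. (\<mu>, mkL H \<mu> pols)) (Q' \<mu>))" .
  have pol: "\<forall>\<mu>\<in>set_pmf p. \<forall>pols\<in>set_pmf (Q' \<mu>). set pols \<subseteq> policies S A H \<and> length pols = Suc l"
  proof (intro ballI)
    fix \<mu> pols assume m: "\<mu> \<in> set_pmf p" and pp: "pols \<in> set_pmf (Q' \<mu>)"
    then obtain pols0 \<mu>h where "pols0 \<in> set_pmf (Q \<mu>)" "pols = pols0 @ [ag (hal 1 (mkL H \<mu> pols0) \<mu>h)]"
      by (auto simp: Q'_def G_def)
    then show "set pols \<subseteq> policies S A H \<and> length pols = Suc l" using invQ_pol[OF Q m] agin by auto
  qed
  have dy: "Q' \<mu> = Q' \<mu>'" if "\<mu> \<in> set_pmf p" "\<mu>' \<in> set_pmf p" "dyn S A H \<mu> = dyn S A H \<mu>'" for \<mu> \<mu>'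
  proof -
    have QQ: "Q \<mu> = Q \<mu>'" using invQ_dyn[OF Q that] .
    have "G \<mu> pols = G \<mu>' pols" if "pols \<in> set_pmf (Q \<mu>)" for pols
    proof -
      have "set pols \<subseteq> policies S A H" using invQ_pol[OF Q \<open>\<mu> \<in> set_pmf p\<close> that] by blast
      then have c: "cens (mkL H \<mu> pols) = cens (mkL H \<mu>' pols)"
        using cens_mkL_dyn[OF validI[OF \<open>\<mu> \<in> set_pmf p\<close>] validI[OF \<open>\<mu>' \<in> set_pmf p\<close>] \<open>dyn S A H \<mu> = dyn S A H \<mu>'\<close>] by blast
      have "hal 1 (mkL H \<mu> pols) x = hal 1 (mkL H \<mu>' pols) x" for x
        by (rule cens_eq_hal[OF c])
      moreover have "post 1 \<epsilon> (Dl l) (mkL H \<mu> pols) = post 1 \<epsilon> (Dl l) (mkL H \<mu>' pols)"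
        by (rule cens_eq_post[OF c])
      ultimately show ?thesis unfolding G_def by simp
    qed
    then show ?thesis unfolding Q'_def QQ by (intro bind_pmf_cong) (auto simp: QQ)
  qed
  have "invQ (Suc l) Q'" unfolding invQ_def using eq pol dy by blast
  then show ?case by blast
qed

end


lemma prod_indicator_if: "finite E \<Longrightarrow> (\<Prod>t\<in>E. indicator (B t) (f t) :: real) = (if \<forall>t\<in>E. f t \<in> B t then 1 else 0)"
  by (induction rule: finite_induct) (auto simp: indicator_def)

context hh begin

lemma indep_E:
  fixes g :: "dmodel \<Rightarrow> real" and w :: "real \<Rightarrow> real"
  assumes g: "\<And>\<mu> \<mu>'. \<mu> \<in> set_pmf p \<Longrightarrow> \<mu>' \<in> set_pmf p \<Longrightarrow> dyn S A H \<mu> = dyn S A H \<mu>' \<Longrightarrow> g \<mu> = g \<mu>'"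
    and gb: "\<And>\<mu>. \<mu> \<in> set_pmf p \<Longrightarrow> \<bar>g \<mu>\<bar> \<le> B"
    and E: "E \<subseteq> triples S A H" and t0: "t0 \<in> triples S A H" "t0 \<notin> E"
    and w: "\<And>\<mu>. \<mu> \<in> set_pmf p \<Longrightarrow> 0 \<le> w (rew3 \<mu> t0) \<and> w (rew3 \<mu> t0) \<le> 1"
  shows "measure_pmf.expectation p (\<lambda>\<mu>. g \<mu> * ((if \<forall>t\<in>E. rew3 \<mu> t \<in> Bs t then 1 else 0) * w (rew3 \<mu> t0)))
     = measure_pmf.expectation p g * (\<Prod>t\<in>E. measure_pmf.prob p {\<mu>. rew3 \<mu> t \<in> Bs t}) * measure_pmf.expectation p (\<lambda>\<mu>. w (rew3 \<mu> t0))"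
proof -
  define T where "T = triples S A H"
  have fT: "finite T" by (simp add: T_def finite_triples)
  have fE: "finite E" using E fT finite_subset T_def by blast
  define k where "k t x = (if t \<in> E then indicator (Bs t) x else if t = t0 then w x else 1)" for t and x :: real
  define g' where "g' d = g (SOME \<mu>. \<mu> \<in> set_pmf p \<and> dyn S A H \<mu> = d)" for d
  have g': "g \<mu> = g' (dyn S A H \<mu>)" if "\<mu> \<in> set_pmf p" for \<mu>
  proof -
    have "\<exists>\<mu>'. \<mu>' \<in> set_pmf p \<and> dyn S A H \<mu>' = dyn S A H \<mu>" using that by blast
    then have "(SOME \<mu>'. \<mu>' \<in> set_pmf p \<and> dyn S A H \<mu>' = dyn S A H \<mu>) \<in> set_pmf p \<and>
        dyn S A H (SOME \<mu>'. \<mu>' \<in> set_pmf p \<and> dyn S A H \<mu>' = dyn S A H \<mu>) = dyn S A H \<mu>"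
      by (rule someI_ex)
    then show ?thesis unfolding g'_def using g[OF that] by metis
  qed
  have split: "(\<Prod>t\<in>T. (if t \<in> E then a t else if t = t0 then b else 1)) = (\<Prod>t\<in>E. a t) * b" for a :: "_ \<Rightarrow> real" and b
  proof -
    have "(\<Prod>t\<in>T. (if t \<in> E then a t else if t = t0 then b else 1)) = (\<Prod>t\<in>T \<inter> {t. t \<in> E}. a t) * (\<Prod>t\<in>T \<inter> - {t. t \<in> E}. (if t = t0 then b else 1))"
      by (rule prod.If_cases[OF fT])
    also have "T \<inter> {t. t \<in> E} = E" using E T_def by auto
    also have "(\<Prod>t\<in>T \<inter> - {t. t \<in> E}. (if t = t0 then b else 1)) = b"
      using t0 fT by (subst prod.delta) (auto simp: T_def)
    finally show ?thesis .
  qed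
  have "measure_pmf.expectation p (\<lambda>\<mu>. g \<mu> * ((if \<forall>t\<in>E. rew3 \<mu> t \<in> Bs t then 1 else 0) * w (rew3 \<mu> t0)))
      = measure_pmf.expectation p (\<lambda>\<mu>. g \<mu> * (\<Prod>t\<in>T. k t (rew3 \<mu> t)))"
  proof -
    have "(\<Prod>t\<in>T. k t (rew3 \<mu> t)) = (\<Prod>t\<in>T. (if t \<in> E then indicator (Bs t) (rew3 \<mu> t) else if t = t0 then w (rew3 \<mu> t0) else 1))" for \<mu>
      by (rule prod.cong) (auto simp: k_def)
    then show ?thesis by (simp add: split prod_indicator_if[OF fE])
  qed
  also have "\<dots> = measure_pmf.expectation p g * (\<Prod>t\<in>T. measure_pmf.expectation p (\<lambda>\<mu>. k t (rew3 \<mu> t)))"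
    unfolding T_def
  proof (rule indep_int[where g=g and g'=g' and B=B and k=k and B'=1, OF ri g' gb])
    fix t \<mu> assume "t \<in> triples S A H" "\<mu> \<in> set_pmf p"
    then show "0 \<le> k t (rew3 \<mu> t) \<and> k t (rew3 \<mu> t) \<le> 1" using w by (auto simp: k_def indicator_def)
  qed
  also have "(\<Prod>t\<in>T. measure_pmf.expectation p (\<lambda>\<mu>. k t (rew3 \<mu> t)))
     = (\<Prod>t\<in>T. (if t \<in> E then measure_pmf.prob p {\<mu>. rew3 \<mu> t \<in> Bs t} else if t = t0 then measure_pmf.expectation p (\<lambda>\<mu>. w (rew3 \<mu> t0)) else 1))"
  proof (rule prod.cong[OF refl])
    fix t assume "t \<in> T"
    have ind: "(\<lambda>\<mu>. indicator (Bs t) (rew3 \<mu> t)) = (indicator {\<mu>. rew3 \<mu> t \<in> Bs t} :: _ \<Rightarrow> real)"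
      by (auto simp: indicator_def)
    show "measure_pmf.expectation p (\<lambda>\<mu>. k t (rew3 \<mu> t)) = (if t \<in> E then measure_pmf.prob p {\<mu>. rew3 \<mu> t \<in> Bs t} else if t = t0 then measure_pmf.expectation p (\<lambda>\<mu>. w (rew3 \<mu> t0)) else 1)"
      unfolding k_def by (simp add: ind)
  qed
  also have "\<dots> = (\<Prod>t\<in>E. measure_pmf.prob p {\<mu>. rew3 \<mu> t \<in> Bs t}) * measure_pmf.expectation p (\<lambda>\<mu>. w (rew3 \<mu> t0))"
    by (rule split)
  finally show ?thesis by (simp add: mult.assoc)
qed

end


lemma set_sigJ_fst: "\<omega> \<in> set_pmf (sigJ N n e D) \<Longrightarrow> \<exists>L. (fst \<omega>, L) \<in> set_pmf D"
  by (auto simp: sigJ_def split: if_splits; blast)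

lemma sigJ_int:
  fixes v :: "dmodel \<Rightarrow> real"
  assumes N: "0 < N" and fb: "\<And>\<omega>. \<omega> \<in> set_pmf D \<Longrightarrow> \<bar>v (fst \<omega>)\<bar> \<le> B"
  shows "measure_pmf.expectation (sigJ N n e D) (\<lambda>\<omega>. indicator {\<omega>. snd \<omega> = \<sigma>} \<omega> * v (fst \<omega>))
    = measure_pmf.expectation D (\<lambda>(\<mu>,L). (1 / real N) * (v \<mu> * measure_pmf.prob (post n e D L) {x. hal n L x = \<sigma>})
          + (1 - 1 / real N) * (if hon n L = \<sigma> then v \<mu> else 0))"
proof -
  define K where "K \<mu> L b = (if b then map_pmf (\<lambda>\<mu>h. (\<mu>, hal n L \<mu>h)) (post n e D L) else return_pmf (\<mu>, hon n L))" for \<mu> :: dmodel and L :: ledger and b :: bool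
  define f where "f \<omega> = indicator {\<omega>. snd \<omega> = \<sigma>} \<omega> * v (fst \<omega>)" for \<omega> :: "dmodel \<times> ledger"
  have fb2: "\<bar>f \<omega>\<bar> \<le> B" if ex: "\<exists>L. (fst \<omega>, L) \<in> set_pmf D" for \<omega>
  proof -
    obtain L where "(fst \<omega>, L) \<in> set_pmf D" using ex by blast
    then have "\<bar>v (fst \<omega>)\<bar> \<le> B" using fb by fastforce
    then show ?thesis by (auto simp: f_def indicator_def)
  qed
  have sj: "sigJ N n e D = bind_pmf D (\<lambda>(\<mu>, L). bind_pmf (bernoulli_pmf (1 / real N)) (K \<mu> L))"
    unfolding sigJ_def K_def ..
  have "measure_pmf.expectation (sigJ N n e D) f
     = measure_pmf.expectation D (\<lambda>x. measure_pmf.expectation ((\<lambda>(\<mu>, L). bind_pmf (bernoulli_pmf (1 / real N)) (K \<mu> L)) x) f)"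
    unfolding sj by (rule int_bind_pmf[where B=B]) (use fb2 set_sigJ_fst sj in metis)
  also have "\<dots> = measure_pmf.expectation D (\<lambda>(\<mu>,L). (1 / real N) * (v \<mu> * measure_pmf.prob (post n e D L) {x. hal n L x = \<sigma>})
          + (1 - 1 / real N) * (if hon n L = \<sigma> then v \<mu> else 0))"
  proof (intro integral_cong_AE AE_pmfI)
    fix \<omega> assume om: "\<omega> \<in> set_pmf D"
    obtain \<mu> L where o: "\<omega> = (\<mu>, L)" by (cases \<omega>)
    have vb: "\<bar>v \<mu>\<bar> \<le> B" using fb[OF om] o by simp
    have "measure_pmf.expectation (bind_pmf (bernoulli_pmf (1 / real N)) (K \<mu> L)) f
        = measure_pmf.expectation (bernoulli_pmf (1 / real N)) (\<lambda>b. measure_pmf.expectation (K \<mu> L b) f)"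
    proof (rule int_bind_pmf[where B=B])
      fix x assume "x \<in> set_pmf (bind_pmf (bernoulli_pmf (1 / real N)) (K \<mu> L))"
      then have "fst x = \<mu>" by (auto simp: K_def split: if_splits)
      then show "\<bar>f x\<bar> \<le> B" using vb by (auto simp: f_def indicator_def)
    qed
    also have "\<dots> = measure_pmf.expectation (K \<mu> L True) f * (1 / real N) + measure_pmf.expectation (K \<mu> L False) f * (1 - 1 / real N)"
      using N by (subst integral_bernoulli_pmf) auto
    also have "measure_pmf.expectation (K \<mu> L True) f = v \<mu> * measure_pmf.prob (post n e D L) {x. hal n L x = \<sigma>}"
    proof -
      have "measure_pmf.expectation (K \<mu> L True) f = measure_pmf.expectation (post n e D L) (\<lambda>x. v \<mu> * indicator {x. hal n L x = \<sigma>} x)"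
        by (simp add: K_def f_def indicator_def mult.commute)
      also have "\<dots> = v \<mu> * measure_pmf.prob (post n e D L) {x. hal n L x = \<sigma>}" by simp
      finally show ?thesis .
    qed
    also have "measure_pmf.expectation (K \<mu> L False) f = (if hon n L = \<sigma> then v \<mu> else 0)"
      by (simp add: K_def f_def indicator_def)
    finally show "measure_pmf.expectation ((\<lambda>(\<mu>, L). bind_pmf (bernoulli_pmf (1 / real N)) (K \<mu> L)) \<omega>) f =
         (\<lambda>(\<mu>,L). (1 / real N) * (v \<mu> * measure_pmf.prob (post n e D L) {x. hal n L x = \<sigma>})
          + (1 - 1 / real N) * (if hon n L = \<sigma> then v \<mu> else 0)) \<omega>"
      unfolding o by simp
  qed simp_all
  finally show ?thesis unfolding f_def .
qed


lemma int_lin: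
  fixes f g :: "'a \<Rightarrow> real"
  assumes "\<And>x. x \<in> set_pmf M \<Longrightarrow> \<bar>f x\<bar> \<le> B" "\<And>x. x \<in> set_pmf M \<Longrightarrow> \<bar>g x\<bar> \<le> B"
  shows "measure_pmf.expectation M (\<lambda>x. a * f x + b * g x) = a * measure_pmf.expectation M f + b * measure_pmf.expectation M g"
proof -
  have i1: "integrable (measure_pmf M) f" "integrable (measure_pmf M) g"
    using assms by (auto intro!: measure_pmf.integrable_const_bound[where B=B] simp: AE_measure_pmf_iff)
  then show ?thesis by simp
qed

lemma explored_one: "explored 1 L = (\<Union>e\<in>set L. ent_visits e)"
  using explored1 by (simp add: One_nat_def)

lemma hal_eqD1:
  assumes "hal 1 L x = hal 1 L' y"
  shows "cens L = cens L'" "\<And>t. t \<in> explored 1 L \<Longrightarrow> rew3 x t = rew3 y t"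
  using hal_eqD[of L x L' y] assms by (simp_all add: One_nat_def)

lemma hal_eqI1:
  assumes "cens L = cens L'" "\<And>t. t \<in> explored 1 L \<Longrightarrow> rew3 x t = rew3 y t"
  shows "hal 1 L x = hal 1 L' y"
  using hal_eqI[of L L' x y] assms by (simp add: One_nat_def)

lemma explored_mkL1: "explored 1 (mkL H \<mu> pols) = (\<Union>\<pi>\<in>set pols. visits H \<mu> \<pi>)"
  using explored_mkL by (simp add: One_nat_def)

context hh begin

context
  fixes l Q assumes Q: "invQ l Q"
begin

lemma setD: "\<omega> \<in> set_pmf (Dl l) \<Longrightarrow> \<exists>\<mu> pols. \<mu> \<in> set_pmf p \<and> pols \<in> set_pmf (Q \<mu>) \<and> \<omega> = (\<mu>, mkL H \<mu> pols)"
  by (subst (asm) invQ_eq[OF Q]) auto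

lemma setI: "\<mu> \<in> set_pmf p \<Longrightarrow> pols \<in> set_pmf (Q \<mu>) \<Longrightarrow> (\<mu>, mkL H \<mu> pols) \<in> set_pmf (Dl l)"
  by (subst invQ_eq[OF Q]) auto

lemma intD:
  fixes f :: "dmodel \<times> ledger \<Rightarrow> real"
  assumes bnd: "\<And>\<mu> pols. \<mu> \<in> set_pmf p \<Longrightarrow> pols \<in> set_pmf (Q \<mu>) \<Longrightarrow> \<bar>f (\<mu>, mkL H \<mu> pols)\<bar> \<le> B"
    and form: "\<And>\<mu> pols. \<mu> \<in> set_pmf p \<Longrightarrow> pols \<in> set_pmf (Q \<mu>) \<Longrightarrow>
       f (\<mu>, mkL H \<mu> pols) = (if cens (mkL H \<mu> pols) = c then k \<mu> else 0)"
  shows "measure_pmf.expectation (Dl l) f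
     = measure_pmf.expectation p (\<lambda>\<mu>. measure_pmf.prob (Q \<mu>) {pols. cens (mkL H \<mu> pols) = c} * k \<mu>)"
proof -
  have "measure_pmf.expectation (Dl l) f
      = measure_pmf.expectation p (\<lambda>\<mu>. measure_pmf.expectation (map_pmf (\<lambda>pols. (\<mu>, mkL H \<mu> pols)) (Q \<mu>)) f)"
    unfolding invQ_eq[OF Q] by (rule int_bind_pmf[where B=B]) (auto intro: bnd)
  also have "\<dots> = measure_pmf.expectation p (\<lambda>\<mu>. measure_pmf.prob (Q \<mu>) {pols. cens (mkL H \<mu> pols) = c} * k \<mu>)"
  proof (intro integral_cong_AE AE_pmfI)
    fix \<mu> assume m: "\<mu> \<in> set_pmf p"
    have "measure_pmf.expectation (map_pmf (\<lambda>pols. (\<mu>, mkL H \<mu> pols)) (Q \<mu>)) f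
        = measure_pmf.expectation (Q \<mu>) (\<lambda>pols. f (\<mu>, mkL H \<mu> pols))" by simp
    also have "\<dots> = measure_pmf.expectation (Q \<mu>) (\<lambda>pols. indicator {pols. cens (mkL H \<mu> pols) = c} pols * k \<mu>)"
      by (intro integral_cong_AE AE_pmfI) (auto simp: form[OF m] indicator_def)
    also have "\<dots> = measure_pmf.prob (Q \<mu>) {pols. cens (mkL H \<mu> pols) = c} * k \<mu>" by simp
    finally show "measure_pmf.expectation (map_pmf (\<lambda>pols. (\<mu>, mkL H \<mu> pols)) (Q \<mu>)) f =
      measure_pmf.prob (Q \<mu>) {pols. cens (mkL H \<mu> pols) = c} * k \<mu>" .
  qed simp_all
  finally show ?thesis .
qed

lemma gq_dyn:
  assumes "\<mu> \<in> set_pmf p" "\<mu>' \<in> set_pmf p" "dyn S A H \<mu> = dyn S A H \<mu>'"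
  shows "measure_pmf.prob (Q \<mu>) {pols. cens (mkL H \<mu> pols) = c} = measure_pmf.prob (Q \<mu>') {pols. cens (mkL H \<mu>' pols) = c}"
proof -
  have QQ: "Q \<mu> = Q \<mu>'" by (rule invQ_dyn[OF Q assms])
  have "{pols. cens (mkL H \<mu> pols) = c} \<inter> set_pmf (Q \<mu>) = {pols. cens (mkL H \<mu>' pols) = c} \<inter> set_pmf (Q \<mu>)"
  proof -
    have "cens (mkL H \<mu> pols) = cens (mkL H \<mu>' pols)" if "pols \<in> set_pmf (Q \<mu>)" for pols
      using cens_mkL_dyn[OF validI[OF assms(1)] validI[OF assms(2)] assms(3)] invQ_pol[OF Q assms(1) that] by blast
    then show ?thesis by auto
  qed
  then show ?thesis by (metis QQ measure_Int_set_pmf)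
qed

end
end


context hh begin
context
  fixes l Q assumes Q: "invQ l Q"
begin

lemma key:
  fixes \<mu>0 pols0 \<mu>h
  assumes m0: "\<mu>0 \<in> set_pmf p" and p0: "pols0 \<in> set_pmf (Q \<mu>0)"
    and mh: "\<mu>h \<in> set_pmf (post 1 \<epsilon> (Dl l) (mkL H \<mu>0 pols0))"
    and nr: "\<not> reachable S A H \<mu>0 \<subseteq> explored 1 (mkL H \<mu>0 pols0)"
    and rpos: "r_min S A H p > 0"
    and eps: "\<epsilon> = r_min S A H p / (2 * real H)"
    and Cpos: "f_min S A H p \<epsilon> > 0"
    and Nge: "real N \<ge> 6 * real H / (r_min S A H p * f_min S A H p \<epsilon> ^ (S*A*H))"
  shows "\<not> visits H \<mu>0 (agent S A H tb (sigJ N 1 \<epsilon> (Dl l)) (hal 1 (mkL H \<mu>0 pols0) \<mu>h)) \<subseteq> explored 1 (mkL H \<mu>0 pols0)"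
proof (rule notI)
  assume ex0: "visits H \<mu>0 (agent S A H tb (sigJ N 1 \<epsilon> (Dl l)) (hal 1 (mkL H \<mu>0 pols0) \<mu>h)) \<subseteq> explored 1 (mkL H \<mu>0 pols0)"
  define L0 where "L0 = mkL H \<mu>0 pols0"
  define c where "c = cens L0"
  define E where "E = explored 1 L0"
  define \<sigma> where "\<sigma> = hal 1 L0 \<mu>h"
  define J where "J = sigJ N 1 \<epsilon> (Dl l)"
  define \<pi> where "\<pi> = agent S A H tb J \<sigma>"
  define r where "r = r_min S A H p"
  define C where "C = f_min S A H p \<epsilon>"
  define T where "T = triples S A H"
  define n where "n = S*A*H"
  define Pol where "Pol = policies S A H"
  have ex: "visits H \<mu>0 \<pi> \<subseteq> E" using ex0 unfolding \<pi>_def J_def \<sigma>_def L0_def E_def .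
  have valid0: "valid_model S A H \<mu>0" using validI[OF m0] .
  have pol0s: "set pols0 \<subseteq> Pol" using invQ_pol[OF Q m0 p0] Pol_def by blast
  have inD0: "(\<mu>0, L0) \<in> set_pmf (Dl l)" unfolding L0_def by (rule setI[OF Q m0 p0])
  have Edef: "E = (\<Union>\<pi>j\<in>set pols0. visits H \<mu>0 \<pi>j)" unfolding E_def L0_def by (rule explored_mkL1)
  have ET: "E \<subseteq> T" unfolding Edef T_def using visits_sub[OF valid0] pol0s Pol_def by blast
  have piP: "\<pi> \<in> Pol" and argmax: "\<And>\<pi>'. \<pi>' \<in> Pol \<Longrightarrow> cond_exp_value H J \<sigma> \<pi>' \<le> cond_exp_value H J \<sigma> \<pi>"
    using agent_in[OF SAH(2) tbp, where S=S and H=H and J=J and \<sigma>=\<sigma>] unfolding \<pi>_def Pol_def by auto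
  show False
  proof (cases "pols0 = []")
    case True
    then have "E = {}" by (simp add: Edef)
    moreover have "(st \<mu>0 \<pi> 0, \<pi> (st \<mu>0 \<pi> 0) 0, 0) \<in> visits H \<mu>0 \<pi>" using SAH(3) by (auto simp: visits_def)
    ultimately show False using ex by blast
  next
    case ne: False
    obtain \<pi>1 h where pi1: "\<pi>1 \<in> Pol" "h < H" "(st \<mu>0 \<pi>1 h, \<pi>1 (st \<mu>0 \<pi>1 h) h, h) \<notin> E"
      using nr unfolding reachable_def visits_def E_def L0_def Pol_def by blast
    define tr where "tr h = (st \<mu>0 \<pi>1 h, \<pi>1 (st \<mu>0 \<pi>1 h) h, h)" for h
    define h1 where "h1 = (LEAST h. h < H \<and> tr h \<notin> E)"
    have h1: "h1 < H \<and> tr h1 \<notin> E" unfolding h1_def by (rule LeastI[of _ h]) (use pi1 in \<open>simp add: tr_def\<close>)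
    have h1b: "tr h' \<in> E" if "h' < h1" for h'
      using not_less_Least[OF that[unfolded h1_def]] that h1 by auto
    define t0 where "t0 = tr h1"
    have t0T: "t0 \<in> T" using visits_sub[OF valid0, of \<pi>1] pi1(1) h1 unfolding t0_def tr_def T_def Pol_def visits_def by blast
    have t0E: "t0 \<notin> E" using h1 t0_def by simp
    have cons: "pols = pols0 \<and> (\<forall>\<pi>j h. \<pi>j \<in> set pols0 \<longrightarrow> h < H \<longrightarrow> st \<mu> \<pi>j h = st \<mu>0 \<pi>j h)"
      if "cens (mkL H \<mu> pols) = c" for \<mu> pols
      using cens_mkL_eqD[OF that[unfolded c_def L0_def]] by blast
    have expl: "explored 1 (mkL H \<mu> pols) = E" if "cens (mkL H \<mu> pols) = c" for \<mu> pols
      using that explored_cens[of 1 "mkL H \<mu> pols"] explored_cens[of 1 L0] unfolding E_def c_def by simp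
    have Vlo: "rew3 \<mu> t0 \<le> episode_value H \<pi>1 \<mu>"
      if "\<mu> \<in> set_pmf p" "cens (mkL H \<mu> pols) = c" for \<mu> pols
    proof -
      have cs: "\<And>\<pi>j h. \<pi>j \<in> set pols0 \<Longrightarrow> h < H \<Longrightarrow> st \<mu> \<pi>j h = st \<mu>0 \<pi>j h" using cons[OF that(2)] by blast
      have "st \<mu> \<pi>1 h1 = st \<mu>0 \<pi>1 h1"
        using det[OF cs ne, where h=h1 and \<pi>=\<pi>1] h1 h1b unfolding tr_def Edef by blast
      then have "t0 = (st \<mu> \<pi>1 h1, \<pi>1 (st \<mu> \<pi>1 h1) h1, h1)" by (simp add: t0_def tr_def)
      then show ?thesis using ev_ge[OF validI[OF that(1)], where \<pi>=\<pi>1 and h=h1] pi1(1) h1 Pol_def by simp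
    qed
    define gq where "gq \<mu> = measure_pmf.prob (Q \<mu>) {pols. cens (mkL H \<mu> pols) = c}" for \<mu>
    have gq_b: "0 \<le> gq \<mu>" "gq \<mu> \<le> 1" for \<mu> by (simp_all add: gq_def)
    have gq_abs: "\<bar>gq \<mu>\<bar> \<le> 1" for \<mu> using gq_b[of \<mu>] by simp
    have gq_dyn': "gq \<mu> = gq \<mu>'" if "\<mu> \<in> set_pmf p" "\<mu>' \<in> set_pmf p" "dyn S A H \<mu> = dyn S A H \<mu>'" for \<mu> \<mu>'
      unfolding gq_def by (rule gq_dyn[OF Q that])
    define \<Phi> where "\<Phi> = measure_pmf.expectation p gq"
    have Phi_eq: "measure_pmf.prob (Dl l) {\<omega>. cens (snd \<omega>) = c} = \<Phi>"
    proof -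
      have "measure_pmf.prob (Dl l) {\<omega>. cens (snd \<omega>) = c} = measure_pmf.expectation (Dl l) (indicator {\<omega>. cens (snd \<omega>) = c})"
        by simp
      also have "\<dots> = measure_pmf.expectation p (\<lambda>\<mu>. gq \<mu> * 1)"
        unfolding gq_def by (rule intD[OF Q, where B=1]) (auto simp: indicator_def)
      finally show ?thesis by (simp add: \<Phi>_def)
    qed
    have Phi_pos: "\<Phi> > 0"
      using measure_pmf_posI[OF inD0, of "{\<omega>. cens (snd \<omega>) = c}"] Phi_eq c_def by simp
    define Ev where "Ev = {(\<mu>, L'). cens L' = cens L0 \<and> pun 1 \<epsilon> \<mu> L'}"
    define Pp where "Pp = (\<Prod>t\<in>E. measure_pmf.prob p {\<mu>. rew3 \<mu> t \<in> {..\<epsilon>}})"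
    have Ev_eq: "measure_pmf.prob (Dl l) Ev = \<Phi> * Pp"
    proof -
      have "measure_pmf.prob (Dl l) Ev = measure_pmf.expectation (Dl l) (indicator Ev)" by simp
      also have "\<dots> = measure_pmf.expectation p (\<lambda>\<mu>. gq \<mu> * ((if \<forall>t\<in>E. rew3 \<mu> t \<in> {..\<epsilon>} then 1 else 0) * 1))"
        unfolding gq_def
      proof (rule intD[OF Q, where B=1])
        fix \<mu> pols assume "\<mu> \<in> set_pmf p" "pols \<in> set_pmf (Q \<mu>)"
        show "(indicator Ev (\<mu>, mkL H \<mu> pols) :: real) = (if cens (mkL H \<mu> pols) = c then (if \<forall>t\<in>E. rew3 \<mu> t \<in> {..\<epsilon>} then 1 else 0) * 1 else 0)"
          using expl[of \<mu> pols] by (auto simp: indicator_def Ev_def pun_def c_def)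
      qed (auto simp: indicator_def)
      also have "\<dots> = \<Phi> * Pp * measure_pmf.expectation p (\<lambda>\<mu>. 1)"
        unfolding \<Phi>_def Pp_def
        by (rule indep_E[where B=1, OF gq_dyn' gq_abs ET[unfolded T_def] t0T[unfolded T_def] t0E]) auto
      finally show ?thesis by simp
    qed
    have C_le: "C \<le> measure_pmf.prob p {\<mu>. rew3 \<mu> t \<in> {..\<epsilon>}}" if "t \<in> T" for t
    proof -
      have "C \<le> measure_pmf.prob p {\<mu>. rew3 \<mu> t \<le> \<epsilon>}"
        unfolding C_def f_min_def using that T_def by (intro Min_le) (auto simp: finite_triples)
      then show ?thesis by simp
    qed
    have C1: "C \<le> 1" using C_le[OF t0T] measure_pmf.prob_le_1 order_trans by blast
    have Cp: "C > 0" using Cpos C_def by simp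
    have cardT: "card T = n" by (simp add: T_def n_def triples_def card_cartesian_product)
    have fT: "finite T" by (simp add: T_def finite_triples)
    have Pp_ge: "Pp \<ge> C ^ n"
    proof -
      have "C ^ n \<le> C ^ card E"
        using power_decreasing[OF card_mono[OF fT ET] _ C1] Cp cardT by simp
      also have "\<dots> = (\<Prod>t\<in>E. C)" by simp
      also have "\<dots> \<le> Pp" unfolding Pp_def using C_le ET Cp by (intro prod_mono) auto
      finally show ?thesis .
    qed
    have Cn: "C ^ n > 0" using Cp by simp
    have Ypos: "measure_pmf.prob (Dl l) Ev > 0" using Ev_eq Phi_pos Pp_ge Cn by (simp add: order_less_le_trans)
    have EvNE: "set_pmf (Dl l) \<inter> Ev \<noteq> {}"
    proof
      assume "set_pmf (Dl l) \<inter> Ev = {}"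
      then have "measure_pmf.prob (Dl l) Ev = 0" by (metis measure_Int_set_pmf inf_commute measure_empty)
      then show False using Ypos by simp
    qed
    have post_eq: "post 1 \<epsilon> (Dl l) L0 = map_pmf fst (cond_pmf (Dl l) Ev)"
      using EvNE unfolding post_def Ev_def Let_def by simp
    obtain L' where L': "(\<mu>h, L') \<in> set_pmf (Dl l)" "cens L' = c" "pun 1 \<epsilon> \<mu>h L'"
      using mh[folded L0_def] EvNE unfolding post_eq by (auto simp: Ev_def c_def)
    have mhp: "\<mu>h \<in> set_pmf p" using setD[OF Q L'(1)] by auto
    have muh_pun: "rew3 \<mu>h t \<le> \<epsilon>" if "t \<in> E" for t
    proof -
      have "explored 1 L' = E" using L'(2) explored_cens[of 1 L'] explored_cens[of 1 L0] unfolding E_def c_def by simp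
      then show ?thesis using L'(3) that by (auto simp: pun_def)
    qed
    define agr where "agr \<mu> \<longleftrightarrow> (\<forall>t\<in>E. rew3 \<mu> t \<in> {rew3 \<mu>h t})" for \<mu>
    have Vup: "episode_value H \<pi> \<mu> \<le> real H * \<epsilon>"
      if "\<mu> \<in> set_pmf p" "cens (mkL H \<mu> pols) = c" "agr \<mu>" for \<mu> pols
    proof (rule ev_sum_le[OF validI[OF that(1)]])
      show "\<pi> \<in> policies S A H" using piP Pol_def by simp
      fix h assume h: "h < H"
      have cs: "\<And>\<pi>j h. \<pi>j \<in> set pols0 \<Longrightarrow> h < H \<Longrightarrow> st \<mu> \<pi>j h = st \<mu>0 \<pi>j h" using cons[OF that(2)] by blast
      have inE: "(st \<mu>0 \<pi> h', \<pi> (st \<mu>0 \<pi> h') h', h') \<in> E" if "h' < H" for h'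
        using ex that by (auto simp: visits_def)
      have "st \<mu> \<pi> h = st \<mu>0 \<pi> h"
        using det[OF cs ne, where h=h and \<pi>=\<pi>] h inE unfolding Edef by auto
      then show "rew3 \<mu> (st \<mu> \<pi> h, \<pi> (st \<mu> \<pi> h) h, h) \<le> \<epsilon>"
        using inE[OF h] that(3) muh_pun unfolding agr_def by auto
    qed
    define Pa where "Pa = (\<Prod>t\<in>E. measure_pmf.prob p {\<mu>. rew3 \<mu> t \<in> {rew3 \<mu>h t}})"
    define R0 where "R0 = measure_pmf.expectation p (\<lambda>\<mu>. rew3 \<mu> t0)"
    have rew01: "0 \<le> rew3 \<mu> t \<and> rew3 \<mu> t \<le> 1" if "\<mu> \<in> set_pmf p" "t \<in> T" for \<mu> t
      using validI[OF that(1)] that(2) by (auto simp: valid_model_def T_def triples_def rew3_def)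
    have rt0: "0 \<le> rew3 \<mu> t0 \<and> rew3 \<mu> t0 \<le> 1" if "\<mu> \<in> set_pmf p" for \<mu> using rew01[OF that t0T] .
    have Z_eq: "measure_pmf.prob (Dl l) {\<omega>. cens (snd \<omega>) = c \<and> agr (fst \<omega>)} = \<Phi> * Pa"
    proof -
      have "measure_pmf.prob (Dl l) {\<omega>. cens (snd \<omega>) = c \<and> agr (fst \<omega>)}
          = measure_pmf.expectation (Dl l) (indicator {\<omega>. cens (snd \<omega>) = c \<and> agr (fst \<omega>)})" by simp
      also have "\<dots> = measure_pmf.expectation p (\<lambda>\<mu>. gq \<mu> * ((if \<forall>t\<in>E. rew3 \<mu> t \<in> {rew3 \<mu>h t} then 1 else 0) * 1))"
        unfolding gq_def by (rule intD[OF Q, where B=1]) (auto simp: indicator_def agr_def)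
      also have "\<dots> = \<Phi> * Pa * measure_pmf.expectation p (\<lambda>\<mu>. 1)"
        unfolding \<Phi>_def Pa_def
        by (rule indep_E[where B=1, OF gq_dyn' gq_abs ET[unfolded T_def] t0T[unfolded T_def] t0E]) auto
      finally show ?thesis by simp
    qed
    have Zpos: "\<Phi> * Pa > 0"
    proof -
      have "(\<mu>h, L') \<in> {\<omega>. cens (snd \<omega>) = c \<and> agr (fst \<omega>)}" using L'(2) by (simp add: agr_def)
      from measure_pmf_posI[OF L'(1) this] show ?thesis using Z_eq by simp
    qed
    have G1: "measure_pmf.expectation p (\<lambda>\<mu>. gq \<mu> * rew3 \<mu> t0) = \<Phi> * R0"
    proof -
      have "measure_pmf.expectation p (\<lambda>\<mu>. gq \<mu> * ((if \<forall>t\<in>E. rew3 \<mu> t \<in> UNIV then 1 else 0) * rew3 \<mu> t0))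
         = \<Phi> * (\<Prod>t\<in>E. measure_pmf.prob p {\<mu>. rew3 \<mu> t \<in> UNIV}) * R0"
        unfolding \<Phi>_def R0_def
        by (rule indep_E[where B=1, OF gq_dyn' gq_abs ET[unfolded T_def] t0T[unfolded T_def] t0E]) (assumption | rule rt0)+
      then show ?thesis by simp
    qed
    have G2: "measure_pmf.expectation p (\<lambda>\<mu>. gq \<mu> * ((if agr \<mu> then 1 else 0) * rew3 \<mu> t0)) = \<Phi> * Pa * R0"
      unfolding \<Phi>_def R0_def Pa_def agr_def
      by (rule indep_E[where B=1, OF gq_dyn' gq_abs ET[unfolded T_def] t0T[unfolded T_def] t0E]) (assumption | rule rt0)+
    define W where "W = measure_pmf.prob (post 1 \<epsilon> (Dl l) L0) {x. hal 1 L0 x = \<sigma>}"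
    have W0: "0 \<le> W" "W \<le> 1" by (simp_all add: W_def)
    have Wle: "W \<le> (\<Phi> * Pa) / (\<Phi> * Pp)"
    proof -
      have "W = measure_pmf.prob (cond_pmf (Dl l) Ev) (fst -` {x. hal 1 L0 x = \<sigma>})"
        unfolding W_def post_eq by simp
      also have "\<dots> = measure_pmf.expectation (cond_pmf (Dl l) Ev) (indicator (fst -` {x. hal 1 L0 x = \<sigma>}))"
        by simp
      also have "\<dots> = measure_pmf.expectation (Dl l) (\<lambda>\<omega>. indicator Ev \<omega> * indicator (fst -` {x. hal 1 L0 x = \<sigma>}) \<omega>) / measure_pmf.prob (Dl l) Ev"
        by (rule cond_integral[OF EvNE])
      also have "\<dots> \<le> measure_pmf.expectation (Dl l) (indicator {\<omega>. cens (snd \<omega>) = c \<and> agr (fst \<omega>)}) / measure_pmf.prob (Dl l) Ev"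
      proof (rule divide_right_mono[OF int_mono_pmf[where B=1]])
        fix \<omega> assume "\<omega> \<in> set_pmf (Dl l)"
        show "indicator Ev \<omega> * indicator (fst -` {x. hal 1 L0 x = \<sigma>}) \<omega> \<le> (indicator {\<omega>. cens (snd \<omega>) = c \<and> agr (fst \<omega>)} \<omega> :: real)"
        proof (cases "\<omega> \<in> Ev \<and> hal 1 L0 (fst \<omega>) = \<sigma>")
          case True
          then have "cens (snd \<omega>) = c" by (auto simp: Ev_def c_def)
          moreover have "agr (fst \<omega>)"
          proof -
            have heq: "hal 1 L0 (fst \<omega>) = hal 1 L0 \<mu>h" using True \<sigma>_def by simp
            show ?thesis unfolding agr_def E_def using hal_eqD1(2)[OF heq] by simp
          qed
          ultimately show ?thesis by (simp add: indicator_def)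
        qed (auto simp: indicator_def)
      qed (auto simp: indicator_def)
      also have "\<dots> = (\<Phi> * Pa) / (\<Phi> * Pp)" using Z_eq Ev_eq by simp
      finally show ?thesis .
    qed
    have R0_ge: "r \<le> R0"
      unfolding r_def R0_def r_min_def using t0T T_def by (intro Min_le) (auto simp: finite_triples)
    have R0_le: "R0 \<le> 1"
    proof -
      have "R0 \<le> measure_pmf.expectation p (\<lambda>_. 1::real)"
        unfolding R0_def by (rule int_mono_pmf[where B=1]) (auto dest!: rt0)
      then show ?thesis by simp
    qed
    have rpos': "r > 0" using rpos r_def by simp
    have Npos_r: "real N > 0"
    proof -
      have "6 * real H / (r * C ^ n) > 0" using SAH(3) rpos' Cn by simp
      then show ?thesis using Nge unfolding r_def C_def n_def by linarith
    qed
    then have Npos: "0 < N" by simp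
    have True_in: "True \<in> set_pmf (bernoulli_pmf (1 / real N))"
      using Npos_r by (simp add: set_pmf_iff pmf_bernoulli_True)
    have Jne: "(\<mu>0, \<sigma>) \<in> set_pmf J"
      unfolding J_def sigJ_def \<sigma>_def using inD0 True_in mh[folded L0_def] by (force simp: set_bind_pmf)
    define X where "X = {\<omega> :: dmodel \<times> ledger. snd \<omega> = \<sigma>}"
    have XNE: "set_pmf J \<inter> X \<noteq> {}" using Jne X_def by auto
    have PX: "measure_pmf.prob J X > 0" using measure_pmf_posI[OF Jne, of X] X_def by simp
    define F where "F \<pi>' = measure_pmf.expectation J (\<lambda>\<omega>. indicator X \<omega> * episode_value H \<pi>' (fst \<omega>))" for \<pi>'
    have cev: "cond_exp_value H J \<sigma> \<pi>' = F \<pi>' / measure_pmf.prob J X" for \<pi>'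
      unfolding cond_exp_value_def F_def X_def[symmetric] by (rule cond_integral[OF XNE])
    have Vb: "\<bar>episode_value H \<pi>' (fst \<omega>)\<bar> \<le> real H" if vb1: "\<pi>' \<in> Pol" and vb2: "\<omega> \<in> set_pmf (Dl l)" for \<pi>' \<omega>
    proof -
      obtain \<mu> pols where "\<mu> \<in> set_pmf p" "\<omega> = (\<mu>, mkL H \<mu> pols)" using setD[OF Q vb2] by blast
      then show ?thesis using ev_nonneg[OF validI, of \<mu> \<pi>'] ev_le[OF validI, of \<mu> \<pi>'] vb1 Pol_def by simp
    qed
    have Fform: "F \<pi>' = measure_pmf.expectation (Dl l) (\<lambda>\<omega>. if cens (snd \<omega>) = c then
        ((1 / real N) * W + (1 - 1 / real N) * (if agr (fst \<omega>) then 1 else 0)) * episode_value H \<pi>' (fst \<omega>) else 0)"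
      if pp: "\<pi>' \<in> Pol" for \<pi>'
    proof -
      have "F \<pi>' = measure_pmf.expectation (Dl l) (\<lambda>(\<mu>,L). (1 / real N) * (episode_value H \<pi>' \<mu> * measure_pmf.prob (post 1 \<epsilon> (Dl l) L) {x. hal 1 L x = \<sigma>})
          + (1 - 1 / real N) * (if hon 1 L = \<sigma> then episode_value H \<pi>' \<mu> else 0))"
        unfolding F_def J_def X_def by (rule sigJ_int[OF Npos]) (rule Vb[OF pp])
      also have "\<dots> = measure_pmf.expectation (Dl l) (\<lambda>\<omega>. if cens (snd \<omega>) = c then
        ((1 / real N) * W + (1 - 1 / real N) * (if agr (fst \<omega>) then 1 else 0)) * episode_value H \<pi>' (fst \<omega>) else 0)"
      proof (intro integral_cong_AE AE_pmfI)
        fix \<omega> assume om: "\<omega> \<in> set_pmf (Dl l)"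
        obtain \<mu> pols where mp: "\<mu> \<in> set_pmf p" "pols \<in> set_pmf (Q \<mu>)" and o: "\<omega> = (\<mu>, mkL H \<mu> pols)"
          using setD[OF Q om] by blast
        define Lm where "Lm = mkL H \<mu> pols"
        have m1: "measure_pmf.prob (post 1 \<epsilon> (Dl l) Lm) {x. hal 1 Lm x = \<sigma>} = (if cens Lm = c then W else 0)"
        proof (cases "cens Lm = c")
          case True
          then have ce: "cens Lm = cens L0" by (simp add: c_def)
          have "post 1 \<epsilon> (Dl l) Lm = post 1 \<epsilon> (Dl l) L0" by (rule cens_eq_post[OF ce])
          moreover have "{x. hal 1 Lm x = \<sigma>} = {x. hal 1 L0 x = \<sigma>}" using cens_eq_hal[OF ce] by simp
          ultimately show ?thesis using True by (simp add: W_def)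
        next
          case False
          have "{x. hal 1 Lm x = \<sigma>} = {}" using hal_eqD1(1)[of Lm _ L0 \<mu>h] False unfolding \<sigma>_def c_def by auto
          then show ?thesis using False by simp
        qed
        have m2: "(hon 1 Lm = \<sigma>) = (cens Lm = c \<and> agr \<mu>)"
        proof
          assume h: "hon 1 Lm = \<sigma>"
          then have h': "hal 1 Lm \<mu> = hal 1 L0 \<mu>h" unfolding Lm_def hon_mkL \<sigma>_def .
          have ce: "cens Lm = c" using hal_eqD1(1)[OF h'] c_def by simp
          moreover have "agr \<mu>" using hal_eqD1(2)[OF h'] expl[OF ce[unfolded Lm_def]] unfolding agr_def Lm_def by simp
          ultimately show "cens Lm = c \<and> agr \<mu>" by simp
        next
          assume h: "cens Lm = c \<and> agr \<mu>"
          have "hal 1 Lm \<mu> = hal 1 L0 \<mu>h"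
            using h expl[of \<mu> pols] unfolding agr_def Lm_def c_def
            by (intro hal_eqI1) auto
          then show "hon 1 Lm = \<sigma>" unfolding Lm_def hon_mkL \<sigma>_def .
        qed
        show "(\<lambda>(\<mu>,L). (1 / real N) * (episode_value H \<pi>' \<mu> * measure_pmf.prob (post 1 \<epsilon> (Dl l) L) {x. hal 1 L x = \<sigma>})
          + (1 - 1 / real N) * (if hon 1 L = \<sigma> then episode_value H \<pi>' \<mu> else 0)) \<omega> =
          (if cens (snd \<omega>) = c then
        ((1 / real N) * W + (1 - 1 / real N) * (if agr (fst \<omega>) then 1 else 0)) * episode_value H \<pi>' (fst \<omega>) else 0)"
          unfolding o Lm_def[symmetric] using m1 m2 by (simp add: algebra_simps)
      qed simp_all
      finally show ?thesis .
    qed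
    define a where "a = 1 / real N"
    have a01: "0 \<le> a" "a \<le> 1" using Npos_r by (auto simp: a_def)
    have G0: "measure_pmf.expectation p (\<lambda>\<mu>. gq \<mu> * ((if agr \<mu> then 1 else 0) * 1)) = \<Phi> * Pa"
    proof -
      have "measure_pmf.expectation p (\<lambda>\<mu>. gq \<mu> * ((if agr \<mu> then 1 else 0) * 1)) = \<Phi> * Pa * measure_pmf.expectation p (\<lambda>\<mu>. 1)"
        unfolding \<Phi>_def Pa_def agr_def
        by (rule indep_E[where B=1, OF gq_dyn' gq_abs ET[unfolded T_def] t0T[unfolded T_def] t0E]) (assumption | simp)+
      then show ?thesis by simp
    qed
    have epsH: "real H * \<epsilon> = r / 2" using SAH(3) eps r_def by simp
    have eps_le: "real H * \<epsilon> \<le> real H"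
    proof -
      have "r \<le> R0" by (rule R0_ge)
      moreover have "real H \<ge> 1" using SAH(3) by simp
      ultimately show ?thesis using epsH R0_le by linarith
    qed
    have eps1: "\<epsilon> \<le> 1" using eps_le SAH(3) by simp
    have eps0: "0 \<le> \<epsilon>" using eps r_def rpos' SAH(3) by simp
    have Fup: "F \<pi> \<le> a * W * real H * \<Phi> + (1 - a) * (r / 2) * (\<Phi> * Pa)"
    proof -
      have "F \<pi> \<le> measure_pmf.expectation (Dl l) (\<lambda>\<omega>. if cens (snd \<omega>) = c then
          a * W * real H + (1 - a) * (if agr (fst \<omega>) then real H * \<epsilon> else 0) else 0)"
        unfolding Fform[OF piP] a_def[symmetric]
      proof (rule int_mono_pmf[where B="2 * real H"])
        fix \<omega> assume om: "\<omega> \<in> set_pmf (Dl l)"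
        obtain \<mu> pols where mp: "\<mu> \<in> set_pmf p" "pols \<in> set_pmf (Q \<mu>)" and o: "\<omega> = (\<mu>, mkL H \<mu> pols)"
          using setD[OF Q om] by blast
        have V0: "0 \<le> episode_value H \<pi> \<mu>" "episode_value H \<pi> \<mu> \<le> real H"
          using ev_nonneg[OF validI[OF mp(1)]] ev_le[OF validI[OF mp(1)]] piP Pol_def by auto
        have aW: "0 \<le> a * W" "a * W \<le> 1" using a01 W0 by (auto simp: mult_le_one)
        have co: "0 \<le> a * W + (1 - a) * (if agr \<mu> then 1 else 0)" "a * W + (1 - a) * (if agr \<mu> then 1 else 0) \<le> 1"
        proof -
          have "a * W \<le> a * 1" using a01 W0 by (intro mult_left_mono) auto
          then show "0 \<le> a * W + (1 - a) * (if agr \<mu> then 1 else 0)" "a * W + (1 - a) * (if agr \<mu> then 1 else 0) \<le> 1"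
            using a01 aW by auto
        qed
        show "\<bar>(if cens (snd \<omega>) = c then (a * W + (1 - a) * (if agr (fst \<omega>) then 1 else 0)) * episode_value H \<pi> (fst \<omega>) else 0)\<bar> \<le> 2 * real H"
        proof -
          have "(a * W + (1 - a) * (if agr \<mu> then 1 else 0)) * episode_value H \<pi> \<mu> \<le> 1 * real H"
            using co V0 by (intro mult_mono) auto
          moreover have "0 \<le> (a * W + (1 - a) * (if agr \<mu> then 1 else 0)) * episode_value H \<pi> \<mu>"
            using co V0 by simp
          ultimately show ?thesis using o by auto
        qed
        show "\<bar>(if cens (snd \<omega>) = c then a * W * real H + (1 - a) * (if agr (fst \<omega>) then real H * \<epsilon> else 0) else 0)\<bar> \<le> 2 * real H"
        proof -
          have "a * W * real H \<le> 1 * real H" using aW by (intro mult_right_mono) auto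
          moreover have "(1 - a) * (if agr \<mu> then real H * \<epsilon> else 0) \<le> 1 * real H"
            using a01 eps_le epsH rpos' eps1 eps0 by (intro mult_mono) auto
          moreover have "0 \<le> a * W * real H" "0 \<le> (1 - a) * (if agr \<mu> then real H * \<epsilon> else 0)"
            using aW a01 epsH rpos' by auto
          ultimately show ?thesis using o by auto
        qed
        show "(if cens (snd \<omega>) = c then (a * W + (1 - a) * (if agr (fst \<omega>) then 1 else 0)) * episode_value H \<pi> (fst \<omega>) else 0)
            \<le> (if cens (snd \<omega>) = c then a * W * real H + (1 - a) * (if agr (fst \<omega>) then real H * \<epsilon> else 0) else 0)"
        proof (cases "cens (snd \<omega>) = c")
          case True
          then have ce: "cens (mkL H \<mu> pols) = c" using o by simp
          have "a * W * episode_value H \<pi> \<mu> \<le> a * W * real H" using aW V0 by (intro mult_left_mono) auto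
          moreover have "(1 - a) * (if agr \<mu> then 1 else 0) * episode_value H \<pi> \<mu> \<le> (1 - a) * (if agr \<mu> then real H * \<epsilon> else 0)"
            using Vup[OF mp(1) ce] a01 by (cases "agr \<mu>") (auto intro: mult_left_mono)
          ultimately show ?thesis using True o by (simp add: algebra_simps)
        qed simp
      qed
      also have "\<dots> = measure_pmf.expectation p (\<lambda>\<mu>. gq \<mu> * (a * W * real H + (1 - a) * (if agr \<mu> then real H * \<epsilon> else 0)))"
        unfolding gq_def
      proof (rule intD[OF Q, where B="2 * real H"])
        fix \<mu> pols
        have "a * W * real H \<le> 1 * real H" using a01 W0 by (intro mult_right_mono) (auto simp: mult_le_one)
        moreover have "(1 - a) * (if agr \<mu> then real H * \<epsilon> else 0) \<le> 1 * real H"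
          using a01 eps_le epsH rpos' eps1 eps0 by (intro mult_mono) auto
        moreover have "0 \<le> a * W * real H" "0 \<le> (1 - a) * (if agr \<mu> then real H * \<epsilon> else 0)"
          using a01 W0 epsH rpos' by auto
        ultimately show "\<bar>(if cens (snd (\<mu>, mkL H \<mu> pols)) = c then a * W * real H + (1 - a) * (if agr (fst (\<mu>, mkL H \<mu> pols)) then real H * \<epsilon> else 0) else 0)\<bar> \<le> 2 * real H"
          by auto
      qed simp
      also have "\<dots> = measure_pmf.expectation p (\<lambda>\<mu>. (a * W * real H) * gq \<mu> + ((1 - a) * (real H * \<epsilon>)) * (gq \<mu> * ((if agr \<mu> then 1 else 0) * 1)))"
        by (intro integral_cong_AE AE_pmfI) (auto simp: algebra_simps)
      also have "\<dots> = (a * W * real H) * measure_pmf.expectation p gq + ((1 - a) * (real H * \<epsilon>)) * measure_pmf.expectation p (\<lambda>\<mu>. gq \<mu> * ((if agr \<mu> then 1 else 0) * 1))"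
        by (rule int_lin[where B=1]) (use gq_b in \<open>auto simp: abs_mult\<close>)
      also have "\<dots> = (a * W * real H) * \<Phi> + ((1 - a) * (real H * \<epsilon>)) * (\<Phi> * Pa)"
        unfolding G0 \<Phi>_def ..
      finally show ?thesis unfolding epsH by (simp add: algebra_simps)
    qed
    have pi1P: "\<pi>1 \<in> Pol" by (rule pi1(1))
    have Flo: "a * W * \<Phi> * R0 + (1 - a) * (\<Phi> * Pa) * R0 \<le> F \<pi>1"
    proof -
      have aW: "0 \<le> a * W" "a * W \<le> 1"
      proof -
        have "a * W \<le> 1 * 1" using a01 W0 by (intro mult_mono) auto
        then show "0 \<le> a * W" "a * W \<le> 1" using a01 W0 by auto
      qed
      have Hge: "real H \<ge> 1" using SAH(3) by simp
      have lb: "\<bar>(if b then a * W * x + (1 - a) * (if d then x else 0) else 0)\<bar> \<le> 2 * real H"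
        if "0 \<le> x" "x \<le> 1" for b d x
      proof -
        have "a * W * x \<le> 1 * 1" using aW that by (intro mult_mono) auto
        moreover have "(1 - a) * (if d then x else 0) \<le> 1 * 1" using a01 that by (intro mult_mono) auto
        moreover have "0 \<le> a * W * x" "0 \<le> (1 - a) * (if d then x else 0)" using aW a01 that by auto
        ultimately show ?thesis using Hge by auto
      qed
      have "measure_pmf.expectation p (\<lambda>\<mu>. (a * W) * (gq \<mu> * rew3 \<mu> t0) + (1 - a) * (gq \<mu> * ((if agr \<mu> then 1 else 0) * rew3 \<mu> t0)))
          = (a * W) * measure_pmf.expectation p (\<lambda>\<mu>. gq \<mu> * rew3 \<mu> t0) + (1 - a) * measure_pmf.expectation p (\<lambda>\<mu>. gq \<mu> * ((if agr \<mu> then 1 else 0) * rew3 \<mu> t0))"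
      proof (rule int_lin[where B=1])
        fix \<mu> assume "\<mu> \<in> set_pmf p"
        then have "0 \<le> rew3 \<mu> t0" "rew3 \<mu> t0 \<le> 1" using rt0 by auto
        then show "\<bar>gq \<mu> * rew3 \<mu> t0\<bar> \<le> 1" "\<bar>gq \<mu> * ((if agr \<mu> then 1 else 0) * rew3 \<mu> t0)\<bar> \<le> 1"
          using gq_b[of \<mu>] by (auto simp: abs_mult mult_le_one)
      qed
      also have "\<dots> = a * W * \<Phi> * R0 + (1 - a) * (\<Phi> * Pa) * R0" unfolding G1 G2 by (simp add: algebra_simps)
      finally have eq1: "measure_pmf.expectation p (\<lambda>\<mu>. (a * W) * (gq \<mu> * rew3 \<mu> t0) + (1 - a) * (gq \<mu> * ((if agr \<mu> then 1 else 0) * rew3 \<mu> t0)))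
          = a * W * \<Phi> * R0 + (1 - a) * (\<Phi> * Pa) * R0" .
      have "measure_pmf.expectation (Dl l) (\<lambda>\<omega>. if cens (snd \<omega>) = c then a * W * rew3 (fst \<omega>) t0 + (1 - a) * (if agr (fst \<omega>) then rew3 (fst \<omega>) t0 else 0) else 0)
          = measure_pmf.expectation p (\<lambda>\<mu>. gq \<mu> * (a * W * rew3 \<mu> t0 + (1 - a) * (if agr \<mu> then rew3 \<mu> t0 else 0)))"
        unfolding gq_def
      proof (rule intD[OF Q, where B="2 * real H"])
        fix \<mu> pols assume "\<mu> \<in> set_pmf p"
        then show "\<bar>(if cens (snd (\<mu>, mkL H \<mu> pols)) = c then a * W * rew3 (fst (\<mu>, mkL H \<mu> pols)) t0 + (1 - a) * (if agr (fst (\<mu>, mkL H \<mu> pols)) then rew3 (fst (\<mu>, mkL H \<mu> pols)) t0 else 0) else 0)\<bar> \<le> 2 * real H"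
          using lb rt0 by simp
      qed simp
      also have "\<dots> = measure_pmf.expectation p (\<lambda>\<mu>. (a * W) * (gq \<mu> * rew3 \<mu> t0) + (1 - a) * (gq \<mu> * ((if agr \<mu> then 1 else 0) * rew3 \<mu> t0)))"
        by (intro integral_cong_AE AE_pmfI) (auto simp: algebra_simps)
      also have "\<dots> = a * W * \<Phi> * R0 + (1 - a) * (\<Phi> * Pa) * R0" by (rule eq1)
      finally have eq2: "measure_pmf.expectation (Dl l) (\<lambda>\<omega>. if cens (snd \<omega>) = c then a * W * rew3 (fst \<omega>) t0 + (1 - a) * (if agr (fst \<omega>) then rew3 (fst \<omega>) t0 else 0) else 0)
          = a * W * \<Phi> * R0 + (1 - a) * (\<Phi> * Pa) * R0" .
      have "measure_pmf.expectation (Dl l) (\<lambda>\<omega>. if cens (snd \<omega>) = c then a * W * rew3 (fst \<omega>) t0 + (1 - a) * (if agr (fst \<omega>) then rew3 (fst \<omega>) t0 else 0) else 0) \<le> F \<pi>1"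
        unfolding Fform[OF pi1P] a_def[symmetric]
      proof (rule int_mono_pmf[where B="2 * real H"])
        fix \<omega> assume om: "\<omega> \<in> set_pmf (Dl l)"
        obtain \<mu> pols where mp: "\<mu> \<in> set_pmf p" "pols \<in> set_pmf (Q \<mu>)" and o: "\<omega> = (\<mu>, mkL H \<mu> pols)"
          using setD[OF Q om] by blast
        have V0: "0 \<le> episode_value H \<pi>1 \<mu>" "episode_value H \<pi>1 \<mu> \<le> real H"
          using ev_nonneg[OF validI[OF mp(1)]] ev_le[OF validI[OF mp(1)]] pi1P Pol_def by auto
        show "\<bar>(if cens (snd \<omega>) = c then a * W * rew3 (fst \<omega>) t0 + (1 - a) * (if agr (fst \<omega>) then rew3 (fst \<omega>) t0 else 0) else 0)\<bar> \<le> 2 * real H"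
          using lb rt0[OF mp(1)] o by simp
        have aWa: "a * W \<le> a * 1" using a01 W0 by (intro mult_left_mono) auto
        have co: "0 \<le> a * W + (1 - a) * (if agr \<mu> then 1 else 0)" "a * W + (1 - a) * (if agr \<mu> then 1 else 0) \<le> 1"
          using aW a01 aWa by auto
        show "\<bar>(if cens (snd \<omega>) = c then (a * W + (1 - a) * (if agr (fst \<omega>) then 1 else 0)) * episode_value H \<pi>1 (fst \<omega>) else 0)\<bar> \<le> 2 * real H"
        proof -
          have "(a * W + (1 - a) * (if agr \<mu> then 1 else 0)) * episode_value H \<pi>1 \<mu> \<le> 1 * real H"
            using co V0 by (intro mult_mono) auto
          moreover have "0 \<le> (a * W + (1 - a) * (if agr \<mu> then 1 else 0)) * episode_value H \<pi>1 \<mu>"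
            using co V0 by simp
          ultimately show ?thesis using o Hge by auto
        qed
        show "(if cens (snd \<omega>) = c then a * W * rew3 (fst \<omega>) t0 + (1 - a) * (if agr (fst \<omega>) then rew3 (fst \<omega>) t0 else 0) else 0)
           \<le> (if cens (snd \<omega>) = c then (a * W + (1 - a) * (if agr (fst \<omega>) then 1 else 0)) * episode_value H \<pi>1 (fst \<omega>) else 0)"
        proof (cases "cens (snd \<omega>) = c")
          case True
          then have ce: "cens (mkL H \<mu> pols) = c" using o by simp
          have vl: "rew3 \<mu> t0 \<le> episode_value H \<pi>1 \<mu>" by (rule Vlo[OF mp(1) ce])
          have "a * W * rew3 \<mu> t0 \<le> a * W * episode_value H \<pi>1 \<mu>" using aW vl by (intro mult_left_mono) auto
          moreover have "(1 - a) * (if agr \<mu> then rew3 \<mu> t0 else 0) \<le> (1 - a) * (if agr \<mu> then 1 else 0) * episode_value H \<pi>1 \<mu>"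
            using vl a01 V0 by (cases "agr \<mu>") (auto intro: mult_left_mono)
          ultimately show ?thesis using True o by (cases "agr \<mu>"; simp add: algebra_simps; linarith)
        qed simp
      qed
      then show ?thesis using eq2 by simp
    qed
    have "cond_exp_value H J \<sigma> \<pi>1 \<le> cond_exp_value H J \<sigma> \<pi>" by (rule argmax[OF pi1P])
    then have "F \<pi>1 / measure_pmf.prob J X \<le> F \<pi> / measure_pmf.prob J X" unfolding cev .
    then have le: "F \<pi>1 \<le> F \<pi>" using PX by (simp add: divide_le_cancel)
    have K1: "C ^ n \<le> 1" using Cp C1 by (simp add: power_le_one)
    have Yge: "\<Phi> * Pp \<ge> \<Phi> * C ^ n" using Pp_ge Phi_pos by (intro mult_left_mono) auto
    have Nge': "real N \<ge> 6 * real H / (r * C ^ n)" using Nge unfolding r_def C_def n_def .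
    have N1: "real N \<ge> 1" using Npos by simp
    have H1: "1 \<le> real H" using SAH(3) by simp
    show False
      using final_arith[OF N1 Cn K1 rpos' R0_ge R0_le H1 Phi_pos Zpos W0(1) Yge Wle Nge' Flo[unfolded a_def] Fup[unfolded a_def] le] .
  qed
qed

end
end


lemma UN_nth: "(\<Union>j<length L. f (L ! j)) = (\<Union>x\<in>set L. f x)"
  by (auto simp: in_set_conv_nth) (metis nth_mem)

context hh begin

lemma T_ne: "(0,0,0) \<in> triples S A H" using SAH by (simp add: triples_def)

lemma r_min_le1: "r_min S A H p \<le> 1"
proof -
  have "r_min S A H p \<le> measure_pmf.expectation p (\<lambda>\<mu>. rew3 \<mu> (0,0,0))"
    unfolding r_min_def using T_ne by (intro Min_le) (auto simp: finite_triples)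
  also have "\<dots> \<le> measure_pmf.expectation p (\<lambda>\<mu>. 1::real)"
  proof (rule int_mono_pmf[where B=1])
    fix \<mu> assume "\<mu> \<in> set_pmf p"
    then have "0 \<le> rew3 \<mu> (0,0,0) \<and> rew3 \<mu> (0,0,0) \<le> 1"
      using validI SAH by (auto simp: valid_model_def rew3_def)
    then show "\<bar>rew3 \<mu> (0,0,0)\<bar> \<le> 1" "rew3 \<mu> (0,0,0) \<le> 1" by auto
  qed auto
  finally show ?thesis by simp
qed

lemma f_min_le1: "f_min S A H p e \<le> 1"
proof -
  have "f_min S A H p e \<le> measure_pmf.prob p {\<mu>. rew3 \<mu> (0,0,0) \<le> e}"
    unfolding f_min_def using T_ne by (intro Min_le) (auto simp: finite_triples)
  also have "\<dots> \<le> 1" by simp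
  finally show ?thesis .
qed

lemma good:
  assumes rpos: "r_min S A H p > 0"
    and eps: "\<epsilon> = r_min S A H p / (2 * real H)"
    and Cpos: "f_min S A H p \<epsilon> > 0"
    and Nge: "real N \<ge> 6 * real H / (r_min S A H p * f_min S A H p \<epsilon> ^ (S*A*H))"
  shows "\<forall>\<omega>\<in>set_pmf (Dl m). \<forall>l<m. \<not> reachable S A H (fst \<omega>) \<subseteq> (\<Union>j<l. ent_visits (snd \<omega> ! j))
          \<longrightarrow> \<not> ent_visits (snd \<omega> ! l) \<subseteq> (\<Union>j<l. ent_visits (snd \<omega> ! j))"
proof (induction m)
  case 0 then show ?case by simp
next
  case (Suc m)
  obtain Q where Q: "invQ m Q" using inv_ex by blast
  show ?case
  proof
    fix \<omega>' assume "\<omega>' \<in> set_pmf (Dl (Suc m))"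
    then obtain \<omega> where om: "\<omega> \<in> set_pmf (Dl m)" and om': "\<omega>' \<in> set_pmf (hh_step S A H N 1 \<epsilon> tb (Dl m) \<omega>)"
      by auto
    obtain \<mu> pols where mp: "\<mu> \<in> set_pmf p" "pols \<in> set_pmf (Q \<mu>)" and o: "\<omega> = (\<mu>, mkL H \<mu> pols)"
      using setD[OF Q om] by blast
    obtain \<mu>h where mh: "\<mu>h \<in> set_pmf (post 1 \<epsilon> (Dl m) (mkL H \<mu> pols))"
      and o': "\<omega>' = (\<mu>, mkL H \<mu> pols @ [(agent S A H tb (sigJ N 1 \<epsilon> (Dl m)) (hal 1 (mkL H \<mu> pols) \<mu>h),
                  raw_traj H \<mu> (agent S A H tb (sigJ N 1 \<epsilon> (Dl m)) (hal 1 (mkL H \<mu> pols) \<mu>h)))])"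
      using om' unfolding o hh_step_def Let_def by auto
    have len: "length (mkL H \<mu> pols) = m" using invQ_pol[OF Q mp] by (simp add: mkL_def)
    have nth_eq: "snd \<omega>' ! j = snd \<omega> ! j" if "j < m" for j using that len o o' by (simp add: nth_append)
    have U_eq: "(\<Union>j<l. ent_visits (snd \<omega>' ! j)) = (\<Union>j<l. ent_visits (snd \<omega> ! j))" if "l \<le> m" for l
      using nth_eq that by auto
    show "\<forall>l<Suc m. \<not> reachable S A H (fst \<omega>') \<subseteq> (\<Union>j<l. ent_visits (snd \<omega>' ! j))
          \<longrightarrow> \<not> ent_visits (snd \<omega>' ! l) \<subseteq> (\<Union>j<l. ent_visits (snd \<omega>' ! j))"
    proof (intro allI impI)
      fix l assume l: "l < Suc m" and nr: "\<not> reachable S A H (fst \<omega>') \<subseteq> (\<Union>j<l. ent_visits (snd \<omega>' ! j))"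
      show "\<not> ent_visits (snd \<omega>' ! l) \<subseteq> (\<Union>j<l. ent_visits (snd \<omega>' ! j))"
      proof (cases "l < m")
        case True
        have "fst \<omega>' = fst \<omega>" using o o' by simp
        then show ?thesis using Suc.IH om True nr U_eq[of l] nth_eq[OF True] by auto
      next
        case False
        then have lm: "l = m" using l by simp
        have U: "(\<Union>j<l. ent_visits (snd \<omega>' ! j)) = explored 1 (mkL H \<mu> pols)"
        proof -
          have "(\<Union>j<l. ent_visits (snd \<omega>' ! j)) = (\<Union>j<length (mkL H \<mu> pols). ent_visits (mkL H \<mu> pols ! j))"
            using U_eq[of l] lm len o by simp
          also have "\<dots> = (\<Union>x\<in>set (mkL H \<mu> pols). ent_visits x)" by (rule UN_nth)
          also have "\<dots> = explored 1 (mkL H \<mu> pols)" by (rule explored_one[symmetric])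
          finally show ?thesis .
        qed
        have e: "ent_visits (snd \<omega>' ! l) = visits H \<mu> (agent S A H tb (sigJ N 1 \<epsilon> (Dl m)) (hal 1 (mkL H \<mu> pols) \<mu>h))"
          using o' lm len by (simp add: nth_append ent_visits_raw)
        have nr': "\<not> reachable S A H \<mu> \<subseteq> explored 1 (mkL H \<mu> pols)" using nr U o' by simp
        show ?thesis unfolding U e
          by (rule key[OF Q mp mh nr' rpos eps Cpos Nge])
      qed
    qed
  qed
qed

lemma cover:
  assumes rpos: "r_min S A H p > 0"
    and eps: "\<epsilon> = r_min S A H p / (2 * real H)"
    and Cpos: "f_min S A H p \<epsilon> > 0"
    and Nge: "real N \<ge> 6 * real H / (r_min S A H p * f_min S A H p \<epsilon> ^ (S*A*H))"
  shows "\<forall>\<omega>\<in>set_pmf (Dl (S*A*H)). reachable S A H (fst \<omega>) \<subseteq> (\<Union>l<S*A*H. phase_visits S A H N 1 \<epsilon> tb p l \<omega>)"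
proof
  define n where "n = S*A*H"
  fix \<omega> assume om: "\<omega> \<in> set_pmf (Dl (S*A*H))"
  have G: "\<forall>l<n. \<not> reachable S A H (fst \<omega>) \<subseteq> (\<Union>j<l. ent_visits (snd \<omega> ! j))
          \<longrightarrow> \<not> ent_visits (snd \<omega> ! l) \<subseteq> (\<Union>j<l. ent_visits (snd \<omega> ! j))"
    using good[OF rpos eps Cpos Nge, of n] om n_def by blast
  obtain Q where Q: "invQ n Q" using inv_ex by blast
  obtain \<mu> pols where mp: "\<mu> \<in> set_pmf p" "pols \<in> set_pmf (Q \<mu>)" and o: "\<omega> = (\<mu>, mkL H \<mu> pols)"
    using setD[OF Q om[folded n_def]] by blast
  have pl: "set pols \<subseteq> policies S A H" "length pols = n" using invQ_pol[OF Q mp] by auto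
  define U where "U l = (\<Union>j<l. ent_visits (snd \<omega> ! j))" for l
  define R where "R = reachable S A H \<mu>"
  define T where "T = triples S A H"
  have RT: "R \<subseteq> T" unfolding R_def T_def by (rule reachable_sub[OF validI[OF mp(1)]])
  have entR: "ent_visits (snd \<omega> ! j) \<subseteq> R" if "j < n" for j
  proof -
    have "pols ! j \<in> policies S A H" using pl that by auto
    moreover have "ent_visits (snd \<omega> ! j) = visits H \<mu> (pols ! j)"
      using o that pl by (simp add: mkL_def ent_visits_raw)
    ultimately show ?thesis unfolding R_def reachable_def by blast
  qed
  have UR: "U l \<subseteq> R" if ln: "l \<le> n" for l
  proof -
    have "ent_visits (snd \<omega> ! j) \<subseteq> R" if "j < l" for j using entR[of j] that ln by simp
    then show ?thesis unfolding U_def by blast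
  qed
  have fT: "finite T" by (simp add: T_def finite_triples)
  have cardT: "card T = n" by (simp add: T_def n_def triples_def card_cartesian_product)
  have cov: "R \<subseteq> U n"
  proof (rule ccontr)
    assume nc: "\<not> R \<subseteq> U n"
    have mono: "U l \<subseteq> U n" if "l \<le> n" for l using that unfolding U_def
      by (intro UN_mono) auto
    have "l \<le> card (U l)" if "l \<le> n" for l
      using that
    proof (induction l)
      case 0 then show ?case by simp
    next
      case (Suc l)
      have ln: "l < n" using Suc.prems by simp
      have "\<not> R \<subseteq> U l" using nc mono[of l] ln by auto
      then have ne: "\<not> ent_visits (snd \<omega> ! l) \<subseteq> U l" using G ln o unfolding U_def R_def by auto
      have US: "U (Suc l) = U l \<union> ent_visits (snd \<omega> ! l)" unfolding U_def by (auto simp: lessThan_Suc)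
      then have "U l \<subset> U (Suc l)" using ne by auto
      moreover have "finite (U (Suc l))" using UR[OF Suc.prems] RT by (intro finite_subset[OF _ fT]) simp
      ultimately have "card (U l) < card (U (Suc l))" by (rule psubset_card_mono[rotated])
      then show ?case using Suc.IH ln by simp
    qed
    then have "n \<le> card (U n)" by simp
    moreover have "U n \<subseteq> T" using UR[of n] RT by simp
    ultimately have "U n = T" using card_seteq[OF fT] cardT by metis
    then show False using nc RT by simp
  qed
  have "U n \<subseteq> (\<Union>l<n. phase_visits S A H N 1 \<epsilon> tb p l \<omega>)"
    unfolding U_def phase_visits_def by auto
  then show "reachable S A H (fst \<omega>) \<subseteq> (\<Union>l<S*A*H. phase_visits S A H N 1 \<epsilon> tb p l \<omega>)"
    using cov o unfolding R_def n_def by auto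
qed

end

theorem theorem2:
  fixes S A H :: nat and p :: "dmodel pmf" and tb :: "policy set \<Rightarrow> policy"
    and \<epsilon> C :: real and N K :: nat
  assumes "S > 0" "A > 0" "H > 0"
    and "\<forall>\<mu>\<in>set_pmf p. valid_model S A H \<mu>"
    and "reward_indep S A H p"
    and "\<forall>M. M \<noteq> {} \<longrightarrow> tb M \<in> M"
    and "r_min S A H p > 0"
    and "\<epsilon> = r_min S A H p / (2 * real H)"
    and "C = f_min S A H p \<epsilon>"
    and "C > 0"
    and "N = nat \<lceil>6 * real H / (r_min S A H p * C ^ (S * A * H))\<rceil>"
    and "K = S * A * H * N"
  shows "real K \<le> 12 * real (S * A * H\<^sup>2) / (r_min S A H p * C ^ (S * A * H))
    \<and> (AE \<omega> in measure_pmf (hh_dist S A H N 1 \<epsilon> tb p (S * A * H)).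
          reachable S A H (fst \<omega>) \<subseteq> (\<Union>l<S * A * H. phase_visits S A H N 1 \<epsilon> tb p l \<omega>))
    \<and> (\<forall>m. AE \<omega> in measure_pmf (hh_dist S A H N 1 \<epsilon> tb p m). \<forall>l<m.
          \<not> reachable S A H (fst \<omega>) \<subseteq> (\<Union>j<l. ent_visits (snd \<omega> ! j))
          \<longrightarrow> \<not> ent_visits (snd \<omega> ! l) \<subseteq> (\<Union>j<l. ent_visits (snd \<omega> ! j)))"
proof -
  interpret hh S A H N \<epsilon> tb p using assms by unfold_locales auto
  define r where "r = r_min S A H p"
  define x where "x = 6 * real H / (r * C ^ (S * A * H))"
  have Cpos: "f_min S A H p \<epsilon> > 0" using assms(9,10) by simp
  have rp: "r > 0" using assms(7) r_def by simp
  have Cn: "C ^ (S*A*H) > 0" using assms(10) by simp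
  have Nge: "real N \<ge> 6 * real H / (r_min S A H p * f_min S A H p \<epsilon> ^ (S*A*H))"
    using assms(9,11) real_nat_ceiling_ge by simp
  have r1: "r \<le> 1" using r_min_le1 r_def by simp
  have C1: "C ^ (S*A*H) \<le> 1" using f_min_le1 assms(9,10) by (simp add: power_le_one)
  have rC: "r * C ^ (S*A*H) \<le> 1" using r1 C1 rp Cn by (simp add: mult_le_one)
  have H1: "real H \<ge> 1" using assms(3) by simp
  have x6: "x \<ge> 6"
  proof -
    have "6 * real H / (r * C ^ (S*A*H)) \<ge> 6 * real H / 1"
      using rC rp Cn H1 by (intro divide_left_mono) auto
    then show ?thesis using H1 x_def by simp
  qed
  have Nx: "real N \<le> x + 1"
  proof -
    have "\<lceil>x\<rceil> \<ge> 0" using x6 by simp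
    then have "real N = real_of_int \<lceil>x\<rceil>" using assms(11) x_def r_def by simp
    also have "\<dots> \<le> x + 1" by simp
    finally show ?thesis .
  qed
  have part1: "real K \<le> 12 * real (S * A * H\<^sup>2) / (r_min S A H p * C ^ (S * A * H))"
  proof -
    have "real K = real (S*A*H) * real N" using assms(12) by simp
    also have "\<dots> \<le> real (S*A*H) * (2 * x)" using Nx x6 by (intro mult_left_mono) auto
    also have "\<dots> = 12 * real (S * A * H\<^sup>2) / (r_min S A H p * C ^ (S * A * H))"
      unfolding x_def r_def by (simp add: power2_eq_square)
    finally show ?thesis .
  qed
  have part2: "AE \<omega> in measure_pmf (hh_dist S A H N 1 \<epsilon> tb p (S * A * H)).
          reachable S A H (fst \<omega>) \<subseteq> (\<Union>l<S * A * H. phase_visits S A H N 1 \<epsilon> tb p l \<omega>)"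
    using cover[OF assms(7,8) Cpos Nge] by (simp add: AE_measure_pmf_iff)
  have part3: "\<forall>m. AE \<omega> in measure_pmf (hh_dist S A H N 1 \<epsilon> tb p m). \<forall>l<m.
          \<not> reachable S A H (fst \<omega>) \<subseteq> (\<Union>j<l. ent_visits (snd \<omega> ! j))
          \<longrightarrow> \<not> ent_visits (snd \<omega> ! l) \<subseteq> (\<Union>j<l. ent_visits (snd \<omega> ! j))"
    using good[OF assms(7,8) Cpos Nge] by (simp add: AE_measure_pmf_iff)
  show ?thesis using part1 part2 part3 by blast
qed


end
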